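(* Let $\mathcal{H}_C$ and $\mathcal{H}_P$ be finite-dimensional complex Hilbert spaces and let $\rho$ be any (possibly mixed) state on $\mathcal{H}_C\otimes\mathcal{H}_P$. Then $\mathcal{D}(P|C)\le Q(\rho)$, i.e. the quantum discord of $\rho$ is at most its measurement-induced disturbance (for every admissible choice of eigenbases in the definition of $\Pi$).
   Context: All entropies are von Neumann entropies $S(\sigma)=-\mathrm{Tr}\,\sigma\ln\sigma$. For a state $\rho$ on $\mathcal{H}_C\otimes\mathcal{H}_P$ write $\rho_C=\mathrm{Tr}_P\rho$, $\rho_P=\mathrm{Tr}_C\rho$, $S(C)=S(\rho_C)$, $S(P,C)=S(\rho)$, $S(P|C)=S(P,C)-S(C)$, and mutual information $I(\rho)=S(\rho_C)+S(\rho_P)-S(\rho)$. Measurement-induced disturbance: write spectral decompositions $\rho_C=\sum_i p_C^i\Pi_C^i$ and $\rho_P=\sum_j p_P^j\Pi_P^j$ with $\{\Pi_C^i\}$, $\{\Pi_P^j\}$ rank-one projectors onto orthonormal eigenbases of $\rho_C$ and $\rho_P$; set $\Pi(\rho)=\sum_{i,j}(\Pi_C^i\otimes\Pi_P^j)\rho(\Pi_C^i\otimes\Pi_P^j)$ and $Q(\rho)=I(\rho)-I(\Pi(\rho))$. Quantum discord: for a rank-one projective measurement $\{N_j^C\}$ on $\mathcal{H}_C$, let $p_j=\mathrm{Tr}[(N_j^C\otimes\mathbb{1}_P)\rho]$, $\rho_{P|j}=\mathrm{Tr}_C[(N_j^C\otimes\mathbb{1}_P)\rho]/p_j$ for $p_j>0$,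 and $S(P|\{N_j^C\})=\sum_j p_jS(\rho_{P|j})$. Then $\mathcal{D}(P|C)=\min_{\{N_j^C\}}S(P|\{N_j^C\})-S(P|C)$, minimum over all rank-one projective measurements on $C$. *)

theory Defs
  imports "Jordan_Normal_Form.Spectral_Radius" "HOL-Computational_Algebra.Fundamental_Theorem_Algebra"
begin

text \<open>Finite-dimensional setting: H_C = C^m, H_P = C^n, H_C (x) H_P = C^(m*n),
  with the basis vector e_i (x) f_j of the tensor product identified with index i*n + j.\<close>

definition mtrace :: "complex mat \<Rightarrow> complex" where
  "mtrace A = (\<Sum>i<dim_row A. A $$ (i, i))"

definition adj :: "complex mat \<Rightarrow> complex mat" where
  "adj A = mat (dim_col A) (dim_row A) (\<lambda>(i, j). cnj (A $$ (j, i)))"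

definition qform :: "complex mat \<Rightarrow> complex vec \<Rightarrow> complex" where
  "qform A v = (\<Sum>i<dim_vec v. \<Sum>j<dim_vec v. cnj (v $ i) * A $$ (i, j) * v $ j)"

definition density :: "nat \<Rightarrow> complex mat \<Rightarrow> bool" where
  "density d A \<longleftrightarrow> A \<in> carrier_mat d d \<and> adj A = A \<and>
     (\<forall>v \<in> carrier_vec d. Im (qform A v) = 0 \<and> Re (qform A v) \<ge> 0) \<and> mtrace A = 1"

text \<open>Von Neumann entropy S(sigma) = - Tr sigma ln sigma, written out through the
  eigenvalues (with multiplicity, i.e. roots of the characteristic polynomial)
  of the Hermitian matrix sigma; note ln 0 = 0 in Isabelle, so 0 ln 0 = 0.\<close>
definition vN_entropy :: "complex mat \<Rightarrow> real" where
  "vN_entropy A = - (\<Sum>x\<in>#proots (char_poly A). Re x * ln (Re x))"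

definition kron :: "nat \<Rightarrow> nat \<Rightarrow> complex mat \<Rightarrow> complex mat \<Rightarrow> complex mat" where
  "kron m n A B = mat (m * n) (m * n)
     (\<lambda>(r, c). A $$ (r div n, c div n) * B $$ (r mod n, c mod n))"

definition ptrace_P :: "nat \<Rightarrow> nat \<Rightarrow> complex mat \<Rightarrow> complex mat" where
  "ptrace_P m n R = mat m m (\<lambda>(i, i'). \<Sum>j<n. R $$ (i * n + j, i' * n + j))"

definition ptrace_C :: "nat \<Rightarrow> nat \<Rightarrow> complex mat \<Rightarrow> complex mat" where
  "ptrace_C m n R = mat n n (\<lambda>(j, j'). \<Sum>i<m. R $$ (i * n + j, i * n + j'))"

definition proj :: "complex vec \<Rightarrow> complex mat" where
  "proj v = mat (dim_vec v) (dim_vec v) (\<lambda>(i, j). v $ i * cnj (v $ j))"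

definition onb :: "nat \<Rightarrow> (nat \<Rightarrow> complex vec) \<Rightarrow> bool" where
  "onb d w \<longleftrightarrow> (\<forall>k<d. w k \<in> carrier_vec d) \<and>
     (\<forall>k<d. \<forall>l<d. (\<Sum>i<d. cnj (w k $ i) * (w l $ i)) = (if k = l then 1 else 0))"

definition eigenbasis :: "nat \<Rightarrow> complex mat \<Rightarrow> (nat \<Rightarrow> complex vec) \<Rightarrow> bool" where
  "eigenbasis d A u \<longleftrightarrow> onb d u \<and> (\<forall>k<d. \<exists>c. A *\<^sub>v u k = c \<cdot>\<^sub>v u k)"

definition red_C :: "nat \<Rightarrow> nat \<Rightarrow> complex mat \<Rightarrow> complex mat" where
  "red_C m n R = ptrace_P m n R"

definition red_P :: "nat \<Rightarrow> nat \<Rightarrow> complex mat \<Rightarrow> complex mat" where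
  "red_P m n R = ptrace_C m n R"

definition mutual_info :: "nat \<Rightarrow> nat \<Rightarrow> complex mat \<Rightarrow> real" where
  "mutual_info m n R = vN_entropy (red_C m n R) + vN_entropy (red_P m n R) - vN_entropy R"

definition dephase :: "nat \<Rightarrow> nat \<Rightarrow> (nat \<Rightarrow> complex vec) \<Rightarrow> (nat \<Rightarrow> complex vec)
    \<Rightarrow> complex mat \<Rightarrow> complex mat" where
  "dephase m n u v R = mat (m * n) (m * n) (\<lambda>(r, c).
     \<Sum>i<m. \<Sum>j<n. (kron m n (proj (u i)) (proj (v j)) * R * kron m n (proj (u i)) (proj (v j))) $$ (r, c))"

definition MID :: "nat \<Rightarrow> nat \<Rightarrow> (nat \<Rightarrow> complex vec) \<Rightarrow> (nat \<Rightarrow> complex vec)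
    \<Rightarrow> complex mat \<Rightarrow> real" where
  "MID m n u v R = mutual_info m n R - mutual_info m n (dephase m n u v R)"

definition meas_prob :: "nat \<Rightarrow> nat \<Rightarrow> (nat \<Rightarrow> complex vec) \<Rightarrow> complex mat \<Rightarrow> nat \<Rightarrow> real" where
  "meas_prob m n w R j = Re (mtrace (kron m n (proj (w j)) (1\<^sub>m n) * R))"

definition cond_state :: "nat \<Rightarrow> nat \<Rightarrow> (nat \<Rightarrow> complex vec) \<Rightarrow> complex mat \<Rightarrow> nat \<Rightarrow> complex mat" where
  "cond_state m n w R j =
     (1 / complex_of_real (meas_prob m n w R j)) \<cdot>\<^sub>m ptrace_C m n (kron m n (proj (w j)) (1\<^sub>m n) * R)"

definition meas_cond_entropy :: "nat \<Rightarrow> nat \<Rightarrow> (nat \<Rightarrow> complex vec) \<Rightarrow> complex mat \<Rightarrow> real" where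
  "meas_cond_entropy m n w R =
     (\<Sum>j\<in>{j. j < m \<and> meas_prob m n w R j > 0}.
        meas_prob m n w R j * vN_entropy (cond_state m n w R j))"

definition cond_entropy :: "nat \<Rightarrow> nat \<Rightarrow> complex mat \<Rightarrow> real" where
  "cond_entropy m n R = vN_entropy R - vN_entropy (red_C m n R)"

text \<open>Quantum discord D(P|C): minimum (= infimum, which is attained) over all rank-one
  projective measurements on C, i.e. over all orthonormal bases of C^m.\<close>
definition discord :: "nat \<Rightarrow> nat \<Rightarrow> complex mat \<Rightarrow> real" where
  "discord m n R = (INF w \<in> {w. onb m w}. meas_cond_entropy m n w R) - cond_entropy m n R"

end

theory Submission
  imports Defs
begin


definition ip :: "complex vec \<Rightarrow> complex vec \<Rightarrow> complex" where
  "ip x y = (\<Sum>i<dim_vec x. cnj (x $ i) * y $ i)"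

lemma mult_mat_index:
  "A \<in> carrier_mat a b \<Longrightarrow> B \<in> carrier_mat b c \<Longrightarrow> i < a \<Longrightarrow> j < c \<Longrightarrow>
   (A * B) $$ (i,j) = (\<Sum>k<b. A $$ (i,k) * B $$ (k,j))"
  by (auto simp: scalar_prod_def lessThan_atLeast0 intro!: sum.cong)

lemma mult_vec_index:
  "A \<in> carrier_mat a b \<Longrightarrow> x \<in> carrier_vec b \<Longrightarrow> i < a \<Longrightarrow>
   (A *\<^sub>v x) $ i = (\<Sum>k<b. A $$ (i,k) * x $ k)"
  by (auto simp: scalar_prod_def lessThan_atLeast0 intro!: sum.cong)

lemma sum_add_split: "(\<Sum>a<k+(n::nat). f a) = (\<Sum>a<k. f a) + (\<Sum>j<n. f (k+j))"
  by (induction n) (auto simp: add.assoc)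

lemma sum_mn: "(\<Sum>a<(m::nat)*n. f a) = (\<Sum>i<m. \<Sum>j<n. f (i*n+j))"
proof (induction m)
  case (Suc m)
  have "(\<Sum>a<Suc m*n. f a) = (\<Sum>a<m*n + n. f a)" by (simp add: add.commute)
  also have "\<dots> = (\<Sum>a<m*n. f a) + (\<Sum>j<n. f (m*n+j))" by (rule sum_add_split)
  finally show ?case using Suc by simp
qed simp

lemma onb_complete:
  assumes "onb d w" "a < d" "b < d"
  shows "(\<Sum>k<d. w k $ a * cnj (w k $ b)) = (if a = b then 1 else 0)"
proof -
  define U where "U = mat d d (\<lambda>(a,k). w k $ a)"
  define U' where "U' = mat d d (\<lambda>(k,a). cnj (w k $ a))"
  have U: "U \<in> carrier_mat d d" and U': "U' \<in> carrier_mat d d" by (auto simp: U_def U'_def)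
  have "U' * U = 1\<^sub>m d"
  proof (rule eq_matI)
    fix i j assume ij: "i < dim_row (1\<^sub>m d)" "j < dim_col (1\<^sub>m d)"
    then have "(U' * U) $$ (i,j) = (\<Sum>k<d. cnj (w i $ k) * w j $ k)"
      using mult_mat_index[OF U' U] by (simp add: U_def U'_def)
    also have "\<dots> = 1\<^sub>m d $$ (i,j)" using assms(1) ij unfolding onb_def by auto
    finally show "(U' * U) $$ (i,j) = 1\<^sub>m d $$ (i,j)" .
  qed (auto simp: U_def U'_def)
  then have "U * U' = 1\<^sub>m d" using mat_mult_left_right_inverse[OF U' U] by simp
  then have "(U * U') $$ (a,b) = 1\<^sub>m d $$ (a,b)" by simp
  moreover have "(U * U') $$ (a,b) = (\<Sum>k<d. w k $ a * cnj (w k $ b))"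
    using mult_mat_index[OF U U'] assms by (simp add: U_def U'_def)
  ultimately show ?thesis using assms by simp
qed

lemma eig_char_poly:
  assumes A: "A \<in> carrier_mat d d" and w: "onb d w"
    and eig: "\<And>k. k < d \<Longrightarrow> A *\<^sub>v w k = \<mu> k \<cdot>\<^sub>v w k"
  shows "char_poly A = (\<Prod>a\<leftarrow>map \<mu> [0..<d]. [:-a,1:])"
proof -
  define U where "U = mat d d (\<lambda>(a,k). w k $ a)"
  define U' where "U' = mat d d (\<lambda>(k,a). cnj (w k $ a))"
  define D where "D = mat d d (\<lambda>(i,j). if i = j then \<mu> i else 0)"
  have U: "U \<in> carrier_mat d d" and U': "U' \<in> carrier_mat d d" and D: "D \<in> carrier_mat d d"
    by (auto simp: U_def U'_def D_def)
  have wc: "\<And>k. k < d \<Longrightarrow> w k \<in> carrier_vec d" using w unfolding onb_def by auto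
  have "U' * U = 1\<^sub>m d"
  proof (rule eq_matI)
    fix i j assume ij: "i < dim_row (1\<^sub>m d)" "j < dim_col (1\<^sub>m d)"
    then have "(U' * U) $$ (i,j) = (\<Sum>k<d. cnj (w i $ k) * w j $ k)"
      using mult_mat_index[OF U' U] by (simp add: U_def U'_def)
    also have "\<dots> = 1\<^sub>m d $$ (i,j)" using w ij unfolding onb_def by auto
    finally show "(U' * U) $$ (i,j) = 1\<^sub>m d $$ (i,j)" .
  qed (auto simp: U_def U'_def)
  then have UU': "U * U' = 1\<^sub>m d" using mat_mult_left_right_inverse[OF U' U] by simp
  have AU: "A * U = U * D"
  proof (rule eq_matI)
    fix i j assume ij: "i < dim_row (U * D)" "j < dim_col (U * D)"
    then have ij': "i < d" "j < d" using U D by auto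
    have "(A * U) $$ (i,j) = (\<Sum>k<d. A $$ (i,k) * w j $ k)"
      using mult_mat_index[OF A U] ij' by (simp add: U_def)
    also have "\<dots> = (A *\<^sub>v w j) $ i" using mult_vec_index[OF A wc[OF ij'(2)]] ij' by simp
    also have "\<dots> = \<mu> j * w j $ i" using eig[OF ij'(2)] wc[OF ij'(2)] ij' by simp
    also have "\<dots> = (\<Sum>k<d. U $$ (i,k) * D $$ (k,j))"
    proof -
      have "(\<Sum>k<d. U $$ (i,k) * D $$ (k,j)) = (\<Sum>k\<in>{j}. U $$ (i,k) * D $$ (k,j))"
        by (rule sum.mono_neutral_right) (use ij' in \<open>auto simp: D_def\<close>)
      then show ?thesis using ij' by (simp add: U_def D_def)
    qed
    also have "\<dots> = (U * D) $$ (i,j)" using mult_mat_index[OF U D] ij' by simp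
    finally show "(A * U) $$ (i,j) = (U * D) $$ (i,j)" .
  qed (use U D A in auto)
  have "A = A * (U * U')" using UU' A by simp
  also have "\<dots> = A * U * U'" using A U U' by (simp add: assoc_mult_mat)
  also have "\<dots> = U * D * U'" using AU by simp
  finally have "similar_mat_wit A D U U'"
    unfolding similar_mat_wit_def Let_def using A U U' D UU' \<open>U' * U = 1\<^sub>m d\<close> by auto
  then have "similar_mat A D" unfolding similar_mat_def by blast
  then have "char_poly A = char_poly D" by (rule char_poly_similar)
  also have "\<dots> = (\<Prod>a\<leftarrow>diag_mat D. [:-a,1:])"
    by (rule char_poly_upper_triangular[OF D]) (auto simp: upper_triangular_def D_def)
  also have "diag_mat D = map \<mu> [0..<d]"
    by (rule nth_equalityI) (auto simp: diag_mat_def D_def)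
  finally show ?thesis .
qed

lemma proots_linear_prod: "proots (\<Prod>a\<leftarrow>xs. [:-a,1:]) = mset (xs :: 'a :: idom list)"
proof (induction xs)
  case (Cons a xs)
  have nz: "(\<Prod>a\<leftarrow>xs. [:-a,1:]) \<noteq> (0::'a poly)"
    by (auto simp: prod_list_zero_iff)
  have "proots (\<Prod>a\<leftarrow>a#xs. [:-a,1:]) = proots ([:-a,1:] * (\<Prod>a\<leftarrow>xs. [:-a,1:]))" by simp
  also have "\<dots> = proots [:-a,1:] + proots (\<Prod>a\<leftarrow>xs. [:-a,1:])"
    by (rule proots_mult) (use nz in auto)
  finally show ?case using Cons by simp
qed simp

lemma eig_entropy:
  assumes A: "A \<in> carrier_mat d d" and w: "onb d w"
    and eig: "\<And>k. k < d \<Longrightarrow> A *\<^sub>v w k = \<mu> k \<cdot>\<^sub>v w k"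
  shows "vN_entropy A = - (\<Sum>k<d. Re (\<mu> k) * ln (Re (\<mu> k)))"
proof -
  have "proots (char_poly A) = mset (map \<mu> [0..<d])"
    using eig_char_poly[OF A w eig] proots_linear_prod[of "map \<mu> [0..<d]"]
    by (simp add: o_def)
  then have "(\<Sum>x\<in>#proots (char_poly A). Re x * ln (Re x)) = (\<Sum>k\<in>{0..<d}. Re (\<mu> k) * ln (Re (\<mu> k)))"
    by (simp add: sum_unfold_sum_mset image_mset.compositionality o_def)
  also have "\<dots> = (\<Sum>k<d. Re (\<mu> k) * ln (Re (\<mu> k)))"
    by (simp add: lessThan_atLeast0)
  finally show ?thesis unfolding vN_entropy_def by simp
qed

lemma herm_entry: "A \<in> carrier_mat d d \<Longrightarrow> adj A = A \<Longrightarrow> i < d \<Longrightarrow> j < d \<Longrightarrow>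
  A $$ (i,j) = cnj (A $$ (j,i))"
proof -
  assume a: "A \<in> carrier_mat d d" "adj A = A" "i < d" "j < d"
  have "A $$ (i,j) = adj A $$ (i,j)" using a by simp
  also have "\<dots> = cnj (A $$ (j,i))" using a(1,3,4) unfolding adj_def by simp
  finally show ?thesis .
qed

lemma ip_herm:
  assumes A: "A \<in> carrier_mat d d" and h: "adj A = A" and x: "x \<in> carrier_vec d" and y: "y \<in> carrier_vec d"
  shows "ip x (A *\<^sub>v y) = ip (A *\<^sub>v x) y"
proof -
  have "ip x (A *\<^sub>v y) = (\<Sum>i<d. cnj (x $ i) * (\<Sum>k<d. A $$ (i,k) * y $ k))"
    using x mult_vec_index[OF A y] by (simp add: ip_def)
  also have "\<dots> = (\<Sum>i<d. \<Sum>k<d. cnj (x $ i) * A $$ (i,k) * y $ k)"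
    by (simp add: sum_distrib_left mult.assoc)
  also have "\<dots> = (\<Sum>k<d. \<Sum>i<d. cnj (x $ i) * A $$ (i,k) * y $ k)" by (rule sum.swap)
  also have "\<dots> = (\<Sum>k<d. cnj (\<Sum>i<d. A $$ (k,i) * x $ i) * y $ k)"
  proof (rule sum.cong[OF refl])
    fix k assume k: "k \<in> {..<d}"
    have "(\<Sum>i<d. cnj (x $ i) * A $$ (i,k) * y $ k) = (\<Sum>i<d. cnj (A $$ (k,i) * x $ i)) * y $ k"
      unfolding sum_distrib_right
    proof (rule sum.cong[OF refl])
      fix i assume i: "i \<in> {..<d}"
      have "A $$ (i,k) = cnj (A $$ (k,i))" using herm_entry[OF A h, of i k] i k by simp
      then show "cnj (x $ i) * A $$ (i,k) * y $ k = cnj (A $$ (k,i) * x $ i) * y $ k" by simp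
    qed
    then show "(\<Sum>i<d. cnj (x $ i) * A $$ (i,k) * y $ k) = cnj (\<Sum>i<d. A $$ (k,i) * x $ i) * y $ k"
      by simp
  qed
  also have "\<dots> = ip (A *\<^sub>v x) y"
    using A mult_vec_index[OF A x] by (simp add: ip_def)
  finally show ?thesis .
qed
lemma ip_smult_right: "ip x (c \<cdot>\<^sub>v y) = c * ip x y" if "y \<in> carrier_vec (dim_vec x)"
  using that by (auto simp: ip_def sum_distrib_left mult.commute mult.left_commute intro!: sum.cong)

lemma ip_smult_left: "ip (c \<cdot>\<^sub>v x) y = cnj c * ip x y"
  by (auto simp: ip_def sum_distrib_left mult.commute mult.left_commute intro!: sum.cong)

lemma ip_add_right: "x \<in> carrier_vec d \<Longrightarrow> y \<in> carrier_vec d \<Longrightarrow> z \<in> carrier_vec d \<Longrightarrow>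
   ip x (y + z) = ip x y + ip x z"
  by (auto simp: ip_def distrib_left sum.distrib)

lemma ip_cnj: "x \<in> carrier_vec d \<Longrightarrow> y \<in> carrier_vec d \<Longrightarrow> ip x y = cnj (ip y x)"
  by (auto simp: ip_def mult.commute)

lemma mtrace_comm:
  assumes "X \<in> carrier_mat d e" "Y \<in> carrier_mat e d"
  shows "mtrace (X * Y) = mtrace (Y * X)"
proof -
  have "mtrace (X * Y) = (\<Sum>i<d. \<Sum>k<e. X $$ (i,k) * Y $$ (k,i))"
    using assms mult_mat_index[OF assms] by (simp add: mtrace_def)
  also have "\<dots> = (\<Sum>k<e. \<Sum>i<d. Y $$ (k,i) * X $$ (i,k))"
    by (subst sum.swap) (simp add: mult.commute)
  also have "\<dots> = mtrace (Y * X)"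
    using assms mult_mat_index[OF assms(2,1)] by (simp add: mtrace_def)
  finally show ?thesis .
qed

lemma mtrace_similar:
  assumes "similar_mat B T" "B \<in> carrier_mat d d"
  shows "mtrace B = mtrace T"
proof -
  obtain P Q where w: "similar_mat_wit B T P Q" using assms unfolding similar_mat_def by blast
  then have c: "T \<in> carrier_mat d d" "P \<in> carrier_mat d d" "Q \<in> carrier_mat d d"
    and QP: "Q * P = 1\<^sub>m d" and B: "B = P * T * Q"
    using assms(2) unfolding similar_mat_wit_def Let_def by auto
  have "mtrace B = mtrace ((P * T) * Q)" using B by simp
  also have "\<dots> = mtrace (Q * (P * T))" by (rule mtrace_comm) (use c in auto)
  also have "Q * (P * T) = (Q * P) * T" using c by (simp add: assoc_mult_mat)
  also have "\<dots> = T" using QP c by simp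
  finally show ?thesis .
qed

lemma exists_eigen_nonzero:
  assumes B: "B \<in> carrier_mat d d" and tr: "mtrace B \<noteq> 0"
  shows "\<exists>z lam. z \<in> carrier_vec d \<and> z \<noteq> 0\<^sub>v d \<and> B *\<^sub>v z = lam \<cdot>\<^sub>v z \<and> lam \<noteq> 0"
proof -
  obtain es where es: "char_poly B = (\<Prod>a\<leftarrow>es. [:-a,1:])" "length es = d"
    using char_poly_factorized[OF B] by blast
  define T where "T = schur_upper_triangular B es"
  have T: "T \<in> carrier_mat d d" "upper_triangular T" "similar_mat B T"
    using schur_upper_triangular[OF B es(1)] unfolding T_def by auto
  have "mtrace T \<noteq> 0" using mtrace_similar[OF T(3) B] tr by simp
  then obtain r where r: "r < d" "T $$ (r,r) \<noteq> 0"
    using T(1) unfolding mtrace_def by (metis (no_types, lifting) carrier_matD(1) lessThan_iff sum.neutral)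
  have "char_poly B = char_poly T" by (rule char_poly_similar[OF T(3)])
  also have "\<dots> = (\<Prod>a\<leftarrow>diag_mat T. [:-a,1:])" by (rule char_poly_upper_triangular[OF T(1,2)])
  finally have cp: "char_poly B = (\<Prod>a\<leftarrow>diag_mat T. [:-a,1:])" .
  have mem: "T $$ (r,r) \<in> set (diag_mat T)" using r T(1) by (auto simp: diag_mat_def)
  have "poly (char_poly B) (T $$ (r,r)) = 0"
    unfolding cp poly_prod_list prod_list_zero_iff using mem by auto
  then have "eigenvalue B (T $$ (r,r))" using eigenvalue_root_char_poly[OF B] by simp
  then obtain z where "eigenvector B z (T $$ (r,r))" unfolding eigenvalue_def by blast
  then show ?thesis using B r unfolding eigenvector_def by auto
qed




lemma smult_mat_vec: "X \<in> carrier_mat d e \<Longrightarrow> z \<in> carrier_vec e \<Longrightarrow> (c \<cdot>\<^sub>m X) *\<^sub>v z = c \<cdot>\<^sub>v (X *\<^sub>v z)"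
proof -
  assume X: "X \<in> carrier_mat d e" and z: "z \<in> carrier_vec e"
  have cX: "c \<cdot>\<^sub>m X \<in> carrier_mat d e" using X by simp
  show ?thesis
  proof (rule eq_vecI)
    fix i assume "i < dim_vec (c \<cdot>\<^sub>v (X *\<^sub>v z))"
    then have i: "i < d" using X by simp
    show "((c \<cdot>\<^sub>m X) *\<^sub>v z) $ i = (c \<cdot>\<^sub>v (X *\<^sub>v z)) $ i"
      using mult_vec_index[OF cX z i] mult_vec_index[OF X z i] X i
      by (simp add: sum_distrib_left mult.assoc)
  qed (use X in simp)
qed

lemma mtrace_add: "X \<in> carrier_mat d d \<Longrightarrow> Y \<in> carrier_mat d d \<Longrightarrow> mtrace (X + Y) = mtrace X + mtrace Y"
  by (simp add: mtrace_def sum.distrib)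

lemma mtrace_smult: "X \<in> carrier_mat d d \<Longrightarrow> mtrace (c \<cdot>\<^sub>m X) = c * mtrace X"
  by (simp add: mtrace_def sum_distrib_left)

lemma sum_delta_nat: "j < (k::nat) \<Longrightarrow> (\<Sum>i<k. f i * (if j = i then 1 else 0)) = (f j :: complex)"
proof -
  assume "j < k"
  have "(\<Sum>i<k. f i * (if j = i then 1 else 0)) = (\<Sum>i<k. if i = j then f i else 0)"
    by (rule sum.cong) auto
  also have "\<dots> = (if j \<in> {..<k} then f j else 0)" by (rule sum.delta) simp
  finally show ?thesis using \<open>j < k\<close> by simp
qed

lemma spectral_step:
  assumes A: "A \<in> carrier_mat d d" and h: "adj A = A" and kd: "k < d"
    and wc: "\<And>i. i < k \<Longrightarrow> w i \<in> carrier_vec d"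
    and orth: "\<And>i j. i < k \<Longrightarrow> j < k \<Longrightarrow> ip (w i) (w j) = (if i = j then 1 else 0)"
    and eig: "\<And>i. i < k \<Longrightarrow> A *\<^sub>v w i = \<mu> i \<cdot>\<^sub>v w i"
  shows "\<exists>z c. z \<in> carrier_vec d \<and> z \<noteq> 0\<^sub>v d \<and> (\<forall>i<k. ip (w i) z = 0) \<and> A *\<^sub>v z = c \<cdot>\<^sub>v z"
proof -
  define Pr where "Pr = mat d d (\<lambda>(r,s). (if r = s then 1 else 0) - (\<Sum>i<k. w i $ r * cnj (w i $ s)))"
  have Pr: "Pr \<in> carrier_mat d d" by (simp add: Pr_def)
  have Prv: "(Pr *\<^sub>v y) $ r = y $ r - (\<Sum>i<k. ip (w i) y * w i $ r)" if y: "y \<in> carrier_vec d" and r: "r < d" for y r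
  proof -
    have "(Pr *\<^sub>v y) $ r = (\<Sum>s<d. ((if r = s then 1 else 0) - (\<Sum>i<k. w i $ r * cnj (w i $ s))) * y $ s)"
      using mult_vec_index[OF Pr y r] r by (simp add: Pr_def)
    also have "\<dots> = (\<Sum>s<d. (if r = s then 1 else 0) * y $ s) - (\<Sum>s<d. \<Sum>i<k. w i $ r * cnj (w i $ s) * y $ s)"
      by (simp add: left_diff_distrib sum_subtractf sum_distrib_right)
    also have "(\<Sum>s<d. (if r = s then 1 else 0) * y $ s) = y $ r"
    proof -
      have "(\<Sum>s<d. (if r = s then 1 else 0) * y $ s) = (\<Sum>s<d. if s = r then y $ s else 0)"
        by (rule sum.cong) auto
      then show ?thesis using r by (simp add: sum.delta)
    qed
    also have "(\<Sum>s<d. \<Sum>i<k. w i $ r * cnj (w i $ s) * y $ s) = (\<Sum>i<k. \<Sum>s<d. w i $ r * cnj (w i $ s) * y $ s)"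
      by (rule sum.swap)
    also have "\<dots> = (\<Sum>i<k. ip (w i) y * w i $ r)"
    proof (rule sum.cong[OF refl])
      fix i assume "i \<in> {..<k}"
      then have "dim_vec (w i) = d" using wc by auto
      then show "(\<Sum>s<d. w i $ r * cnj (w i $ s) * y $ s) = ip (w i) y * w i $ r"
        unfolding ip_def sum_distrib_right by (intro sum.cong) (simp_all add: ac_simps)
    qed
    finally show ?thesis .
  qed
  have Prc: "Pr *\<^sub>v y \<in> carrier_vec d" for y by (rule carrier_vecI) (use Pr in simp)
  have Pr_orth: "ip (w j) (Pr *\<^sub>v y) = 0" if y: "y \<in> carrier_vec d" and j: "j < k" for y j
  proof -
    have dj: "dim_vec (w j) = d" using wc[OF j] by simp
    let ?c = "\<lambda>i. ip (w i) y"
    have "ip (w j) (Pr *\<^sub>v y) = (\<Sum>r<d. cnj (w j $ r) * (y $ r - (\<Sum>i<k. ?c i * w i $ r)))"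
    proof -
      have "ip (w j) (Pr *\<^sub>v y) = (\<Sum>r<d. cnj (w j $ r) * (Pr *\<^sub>v y) $ r)" unfolding ip_def dj ..
      also have "\<dots> = (\<Sum>r<d. cnj (w j $ r) * (y $ r - (\<Sum>i<k. ?c i * w i $ r)))"
        by (rule sum.cong[OF refl]) (simp add: Prv[OF y])
      finally show ?thesis .
    qed
    also have "\<dots> = (\<Sum>r<d. cnj (w j $ r) * y $ r) - (\<Sum>r<d. \<Sum>i<k. cnj (w j $ r) * (?c i * w i $ r))"
      by (simp only: right_diff_distrib sum_subtractf sum_distrib_left)
    also have "(\<Sum>r<d. cnj (w j $ r) * y $ r) = ip (w j) y" unfolding ip_def dj ..
    also have "(\<Sum>r<d. \<Sum>i<k. cnj (w j $ r) * (?c i * w i $ r)) = (\<Sum>i<k. \<Sum>r<d. cnj (w j $ r) * (?c i * w i $ r))"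
      by (rule sum.swap)
    also have "\<dots> = (\<Sum>i<k. ?c i * ip (w j) (w i))"
      unfolding ip_def dj sum_distrib_left by (simp only: mult.left_commute)
    also have "\<dots> = (\<Sum>i<k. ?c i * (if j = i then 1 else 0))"
      using orth j by (intro sum.cong) auto
    also have "\<dots> = ip (w j) y" using sum_delta_nat[OF j] by simp
    finally show ?thesis by simp
  qed
  have Pr_fix: "Pr *\<^sub>v y = y" if y: "y \<in> carrier_vec d" and o: "\<forall>j<k. ip (w j) y = 0" for y
    by (rule eq_vecI) (use y o Prv[OF y] Pr in auto)
  have trPr: "mtrace Pr = of_nat (d - k)"
  proof -
    have "mtrace Pr = (\<Sum>r<d. 1 - (\<Sum>i<k. w i $ r * cnj (w i $ r)))"
      by (simp add: mtrace_def Pr_def)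
    also have "\<dots> = of_nat d - (\<Sum>r<d. \<Sum>i<k. w i $ r * cnj (w i $ r))"
      by (simp add: sum_subtractf)
    also have "(\<Sum>r<d. \<Sum>i<k. w i $ r * cnj (w i $ r)) = (\<Sum>i<k. \<Sum>r<d. w i $ r * cnj (w i $ r))"
      by (rule sum.swap)
    also have "(\<Sum>i<k. \<Sum>r<d. w i $ r * cnj (w i $ r)) = (\<Sum>i<k. ip (w i) (w i))"
    proof (rule sum.cong[OF refl])
      fix i assume "i \<in> {..<k}"
      then have "dim_vec (w i) = d" using wc by auto
      then show "(\<Sum>r<d. w i $ r * cnj (w i $ r)) = ip (w i) (w i)" by (simp add: ip_def mult.commute)
    qed
    also have "\<dots> = (\<Sum>i<k. 1)" using orth by (intro sum.cong) auto
    finally show ?thesis using kd by (simp add: of_nat_diff)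
  qed
  define M where "M = Pr * A * Pr"
  have M: "M \<in> carrier_mat d d" using Pr A by (simp add: M_def)
  define c where "c = (1 - mtrace M) / of_nat (d - k)"
  define B where "B = M + c \<cdot>\<^sub>m Pr"
  have B: "B \<in> carrier_mat d d" using M Pr by (simp add: B_def)
  have "mtrace B = mtrace M + c * of_nat (d - k)"
    using mtrace_add[OF M, of "c \<cdot>\<^sub>m Pr"] mtrace_smult[OF Pr] trPr Pr by (simp add: B_def)
  also have "\<dots> = 1" using kd by (simp add: c_def)
  finally have trB: "mtrace B \<noteq> 0" by simp
  obtain z lam where z: "z \<in> carrier_vec d" "z \<noteq> 0\<^sub>v d" "B *\<^sub>v z = lam \<cdot>\<^sub>v z" "lam \<noteq> 0"
    using exists_eigen_nonzero[OF B trB] by blast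
  have Bz: "B *\<^sub>v z = Pr *\<^sub>v (A *\<^sub>v (Pr *\<^sub>v z)) + c \<cdot>\<^sub>v (Pr *\<^sub>v z)"
  proof -
    have "B *\<^sub>v z = M *\<^sub>v z + (c \<cdot>\<^sub>m Pr) *\<^sub>v z"
      unfolding B_def by (rule add_mult_distrib_mat_vec) (use M Pr z in auto)
    also have "M *\<^sub>v z = Pr *\<^sub>v (A *\<^sub>v (Pr *\<^sub>v z))"
      unfolding M_def using Pr A z by (simp add: assoc_mult_mat_vec[of _ d d _ d])
    also have "(c \<cdot>\<^sub>m Pr) *\<^sub>v z = c \<cdot>\<^sub>v (Pr *\<^sub>v z)" by (rule smult_mat_vec[OF Pr z(1)])
    finally show ?thesis .
  qed
  have orthz: "\<forall>j<k. ip (w j) z = 0"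
  proof (intro allI impI)
    fix j assume j: "j < k"
    have "lam * ip (w j) z = ip (w j) (B *\<^sub>v z)"
      using z ip_smult_right[of z "w j" lam] wc[OF j] by simp
    also have "\<dots> = ip (w j) (Pr *\<^sub>v (A *\<^sub>v (Pr *\<^sub>v z))) + ip (w j) (c \<cdot>\<^sub>v (Pr *\<^sub>v z))"
      unfolding Bz by (rule ip_add_right[of _ d]) (use wc[OF j] Pr A Prc in auto)
    also have "\<dots> = 0"
      using Pr_orth[OF _ j, of "A *\<^sub>v (Pr *\<^sub>v z)"] Prc[of z] carrier_vecI[of "A *\<^sub>v (Pr *\<^sub>v z)" d] Pr_orth[OF z(1) j] ip_smult_right[of "Pr *\<^sub>v z" "w j" c] wc[OF j] A Pr
      by simp
    finally show "ip (w j) z = 0" using z(4) by simp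
  qed
  have Az: "A *\<^sub>v z \<in> carrier_vec d" using A z by simp
  have orthAz: "\<forall>j<k. ip (w j) (A *\<^sub>v z) = 0"
  proof (intro allI impI)
    fix j assume j: "j < k"
    have "ip (w j) (A *\<^sub>v z) = ip (A *\<^sub>v w j) z" by (rule ip_herm[OF A h wc[OF j] z(1)])
    also have "\<dots> = cnj (\<mu> j) * ip (w j) z" using eig[OF j] ip_smult_left by simp
    finally show "ip (w j) (A *\<^sub>v z) = 0" using orthz j by simp
  qed
  have "B *\<^sub>v z = A *\<^sub>v z + c \<cdot>\<^sub>v z"
    unfolding Bz Pr_fix[OF z(1) orthz] Pr_fix[OF Az orthAz] ..
  then have BAz: "A *\<^sub>v z + c \<cdot>\<^sub>v z = lam \<cdot>\<^sub>v z" using z(3) by simp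
  have "A *\<^sub>v z = (lam - c) \<cdot>\<^sub>v z"
  proof (rule eq_vecI)
    fix r assume "r < dim_vec ((lam - c) \<cdot>\<^sub>v z)"
    then have r: "r < d" using z(1) by simp
    have "(A *\<^sub>v z + c \<cdot>\<^sub>v z) $ r = (lam \<cdot>\<^sub>v z) $ r" using BAz by simp
    then have "(A *\<^sub>v z) $ r + c * z $ r = lam * z $ r" using r Az z(1) by simp
    then show "(A *\<^sub>v z) $ r = ((lam - c) \<cdot>\<^sub>v z) $ r" using r z(1) by (simp add: left_diff_distrib eq_diff_eq)
  qed (use A z(1) in simp)
  then show ?thesis using z orthz by blast
qed


lemma ip_self: "z \<in> carrier_vec d \<Longrightarrow> ip z z = of_real (\<Sum>i<d. (cmod (z $ i))^2)"
proof -
  assume z: "z \<in> carrier_vec d"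
  have "ip z z = (\<Sum>i<d. complex_of_real ((cmod (z $ i))^2))"
    unfolding ip_def using z
  proof (intro sum.cong)
    fix i show "cnj (z $ i) * z $ i = complex_of_real ((cmod (z $ i))^2)"
      using complex_norm_square[of "z $ i"] by (simp only: mult.commute)
  qed auto
  then show ?thesis by (simp add: of_real_sum)
qed

lemma ip_self_pos: assumes z: "z \<in> carrier_vec d" "z \<noteq> 0\<^sub>v d"
  shows "(\<Sum>i<d. (cmod (z $ i))^2) > 0"
proof -
  obtain i where i: "i < d" "z $ i \<noteq> 0" using z by (metis carrier_vecD eq_vecI index_zero_vec(1) index_zero_vec(2))
  have "(\<Sum>i<d. (cmod (z $ i))^2) \<ge> (cmod (z $ i))^2"
    by (rule member_le_sum) (use i in auto)
  moreover have "(cmod (z $ i))^2 > 0" using i by simp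
  ultimately show ?thesis by linarith
qed

lemma spectral_partial:
  assumes A: "A \<in> carrier_mat d d" and h: "adj A = A"
  shows "k \<le> d \<Longrightarrow> \<exists>w \<mu>. (\<forall>i<k. w i \<in> carrier_vec d) \<and>
     (\<forall>i<k. \<forall>j<k. ip (w i) (w j) = (if i = j then 1 else 0)) \<and> (\<forall>i<k. A *\<^sub>v w i = \<mu> i \<cdot>\<^sub>v w i)"
proof (induction k)
  case 0
  then show ?case by auto
next
  case (Suc k)
  then obtain w \<mu> where wc: "\<forall>i<k. w i \<in> carrier_vec d"
     and orth: "\<forall>i<k. \<forall>j<k. ip (w i) (w j) = (if i = j then 1 else 0)"
     and eig: "\<forall>i<k. A *\<^sub>v w i = \<mu> i \<cdot>\<^sub>v w i" by auto
  have kd: "k < d" using Suc by simp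
  obtain z c where z: "z \<in> carrier_vec d" "z \<noteq> 0\<^sub>v d" "\<forall>i<k. ip (w i) z = 0" "A *\<^sub>v z = c \<cdot>\<^sub>v z"
    using spectral_step[OF A h kd, of w \<mu>] wc orth eig by blast
  define N where "N = (\<Sum>i<d. (cmod (z $ i))^2)"
  have N: "N > 0" using ip_self_pos[OF z(1,2)] by (simp add: N_def)
  define s where "s = complex_of_real (1 / sqrt N)"
  define z' where "z' = s \<cdot>\<^sub>v z"
  have z'c: "z' \<in> carrier_vec d" using z by (simp add: z'_def)
  have "ip z' z' = cnj s * (s * ip z z)"
    unfolding z'_def using z by (simp add: ip_smult_left ip_smult_right)
  also have "\<dots> = 1"
  proof -
    have sq: "(complex_of_real (sqrt N))^2 = complex_of_real N"
      unfolding of_real_power[symmetric] using N by simp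
    have "ip z z = complex_of_real N" using ip_self[OF z(1)] by (simp add: N_def)
    then have "cnj s * (s * ip z z) = complex_of_real ((1 / sqrt N) * ((1 / sqrt N) * N))"
      unfolding s_def of_real_mult by simp
    also have "(1 / sqrt N) * ((1 / sqrt N) * N) = 1"
      using N by (simp add: field_simps)
    finally show ?thesis by simp
  qed
  finally have z'n: "ip z' z' = 1" .
  have z'o: "ip (w i) z' = 0" if "i < k" for i
  proof -
    have "dim_vec (w i) = d" using wc that by auto
    then show ?thesis unfolding z'_def using ip_smult_right[of z "w i" s] z that by simp
  qed
  have z'o2: "ip z' (w i) = 0" if "i < k" for i
    using ip_cnj[OF z'c, of "w i"] z'o[OF that] wc that by simp
  have z'e: "A *\<^sub>v z' = c \<cdot>\<^sub>v z'"
    unfolding z'_def using mult_mat_vec[OF A z(1)] z(4) by (simp add: smult_smult_assoc mult.commute)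
  define w' where "w' = w(k := z')"
  define \<mu>' where "\<mu>' = \<mu>(k := c)"
  have "\<forall>i<Suc k. w' i \<in> carrier_vec d" using wc z'c by (simp add: w'_def less_Suc_eq)
  moreover have "\<forall>i<Suc k. \<forall>j<Suc k. ip (w' i) (w' j) = (if i = j then 1 else 0)"
    using orth z'n z'o z'o2 by (auto simp: w'_def less_Suc_eq)
  moreover have "\<forall>i<Suc k. A *\<^sub>v w' i = \<mu>' i \<cdot>\<^sub>v w' i"
    using eig z'e by (auto simp: w'_def \<mu>'_def less_Suc_eq)
  ultimately show ?case by blast
qed

lemma spectral:
  assumes A: "A \<in> carrier_mat d d" and h: "adj A = A"
  shows "\<exists>w \<mu>. onb d w \<and> (\<forall>k<d. A *\<^sub>v w k = \<mu> k \<cdot>\<^sub>v w k)"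
proof -
  obtain w \<mu> where wc: "\<forall>i<d. w i \<in> carrier_vec d"
     and orth: "\<forall>i<d. \<forall>j<d. ip (w i) (w j) = (if i = j then 1 else 0)"
     and eig: "\<forall>i<d. A *\<^sub>v w i = \<mu> i \<cdot>\<^sub>v w i"
    using spectral_partial[OF A h, of d] by auto
  have "onb d w" unfolding onb_def
  proof (intro conjI allI impI)
    fix k l assume k: "k < d" and l: "l < d"
    have "dim_vec (w k) = d" using wc k by auto
    then have "(\<Sum>i<d. cnj (w k $ i) * w l $ i) = ip (w k) (w l)" by (simp add: ip_def)
    then show "(\<Sum>i<d. cnj (w k $ i) * w l $ i) = (if k = l then 1 else 0)" using orth k l by simp
  qed (use wc in auto)
  then show ?thesis using eig by blast
qed




lemma jensen_xlnx:
  fixes b x :: "nat \<Rightarrow> real"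
  assumes I: "finite I" and b: "\<And>i. i \<in> I \<Longrightarrow> b i \<ge> 0" and bs: "(\<Sum>i\<in>I. b i) = 1"
    and x: "\<And>i. i \<in> I \<Longrightarrow> x i \<ge> 0"
  shows "(\<Sum>i\<in>I. b i * x i) * ln (\<Sum>i\<in>I. b i * x i) \<le> (\<Sum>i\<in>I. b i * (x i * ln (x i)))"
proof -
  define t where "t = (\<Sum>i\<in>I. b i * x i)"
  have t0: "t \<ge> 0" unfolding t_def using b x by (intro sum_nonneg) auto
  show ?thesis
  proof (cases "t = 0")
    case True
    have "b i * x i = 0" if "i \<in> I" for i
      using True sum_nonneg_eq_0_iff[OF I, of "\<lambda>i. b i * x i"] b x that unfolding t_def by auto
    then have "(\<Sum>i\<in>I. b i * (x i * ln (x i))) = 0" by (intro sum.neutral) auto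
    then show ?thesis using True unfolding t_def by simp
  next
    case False
    then have tp: "t > 0" using t0 by simp
    have tang: "x i * ln (x i) \<ge> x i * ln t + x i - t" if "i \<in> I" for i
    proof (cases "x i = 0")
      case True then show ?thesis using tp by simp
    next
      case False
      then have xp: "x i > 0" using x[OF that] by simp
      have "ln (t / x i) \<le> t / x i - 1" by (rule ln_le_minus_one) (use xp tp in simp)
      then have "x i * ln (t / x i) \<le> x i * (t / x i - 1)" using xp by (simp add: mult_left_mono)
      moreover have "ln (t / x i) = ln t - ln (x i)" using xp tp by (simp add: ln_div)
      moreover have "x i * (t / x i - 1) = t - x i" using xp by (simp add: field_simps)
      ultimately have "x i * (ln t - ln (x i)) \<le> t - x i" by simp
      then show ?thesis by (simp add: algebra_simps)
    qed
    have "(\<Sum>i\<in>I. b i * (x i * ln (x i))) \<ge> (\<Sum>i\<in>I. b i * (x i * ln t + x i - t))"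
      by (intro sum_mono mult_left_mono tang b)
    also have "(\<Sum>i\<in>I. b i * (x i * ln t + x i - t)) = (\<Sum>i\<in>I. b i * x i) * ln t + (\<Sum>i\<in>I. b i * x i) - t * (\<Sum>i\<in>I. b i)"
      by (simp add: algebra_simps sum.distrib sum_subtractf sum_distrib_left sum_distrib_right)
    also have "\<dots> = t * ln t + t - t * (\<Sum>i\<in>I. b i)" unfolding t_def ..
    finally show ?thesis using bs unfolding t_def by simp
  qed
qed


lemma onb_carrier: "onb d w \<Longrightarrow> k < d \<Longrightarrow> w k \<in> carrier_vec d"
  unfolding onb_def by auto

lemma onb_ip: "onb d w \<Longrightarrow> k < d \<Longrightarrow> l < d \<Longrightarrow> ip (w k) (w l) = (if k = l then 1 else 0)"
  unfolding onb_def ip_def by auto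

lemma onb_complete': "onb d w \<Longrightarrow> a < d \<Longrightarrow> b < d \<Longrightarrow>
  (\<Sum>k<d. cnj (w k $ a) * w k $ b) = (if a = b then 1 else 0)"
proof -
  assume a: "onb d w" "a < d" "b < d"
  have "(\<Sum>k<d. cnj (w k $ a) * w k $ b) = (\<Sum>k<d. w k $ b * cnj (w k $ a))" by (simp add: mult.commute)
  also have "\<dots> = (if b = a then 1 else 0)" by (rule onb_complete[OF a(1,3,2)])
  finally show ?thesis by auto
qed

lemma onb_trace:
  assumes w: "onb d w" and M: "M \<in> carrier_mat d d"
  shows "mtrace M = (\<Sum>k<d. ip (w k) (M *\<^sub>v w k))"
proof -
  have "(\<Sum>k<d. ip (w k) (M *\<^sub>v w k)) = (\<Sum>k<d. \<Sum>a<d. \<Sum>b<d. cnj (w k $ a) * M $$ (a,b) * w k $ b)"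
  proof (rule sum.cong[OF refl])
    fix k assume "k \<in> {..<d}"
    then have wk: "w k \<in> carrier_vec d" using onb_carrier[OF w] by auto
    show "ip (w k) (M *\<^sub>v w k) = (\<Sum>a<d. \<Sum>b<d. cnj (w k $ a) * M $$ (a,b) * w k $ b)"
      unfolding ip_def using wk mult_vec_index[OF M wk] by (simp add: sum_distrib_left mult.assoc)
  qed
  also have "\<dots> = (\<Sum>a<d. \<Sum>k<d. \<Sum>b<d. cnj (w k $ a) * M $$ (a,b) * w k $ b)" by (rule sum.swap)
  also have "\<dots> = (\<Sum>a<d. \<Sum>b<d. \<Sum>k<d. cnj (w k $ a) * M $$ (a,b) * w k $ b)"
    by (rule sum.cong[OF refl]) (rule sum.swap)
  also have "\<dots> = (\<Sum>a<d. \<Sum>b<d. M $$ (a,b) * (if a = b then 1 else 0))"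
  proof (intro sum.cong[OF refl])
    fix a b assume "a \<in> {..<d}" "b \<in> {..<d}"
    then have "(\<Sum>k<d. cnj (w k $ a) * w k $ b) = (if a = b then 1 else 0)" using onb_complete'[OF w] by auto
    then show "(\<Sum>k<d. cnj (w k $ a) * M $$ (a,b) * w k $ b) = M $$ (a,b) * (if a = b then 1 else 0)"
    proof -
      have "(\<Sum>k<d. cnj (w k $ a) * M $$ (a,b) * w k $ b) = M $$ (a,b) * (\<Sum>k<d. cnj (w k $ a) * w k $ b)"
        unfolding sum_distrib_left by (rule sum.cong[OF refl]) (simp only: ac_simps)
      then show ?thesis using \<open>(\<Sum>k<d. cnj (w k $ a) * w k $ b) = (if a = b then 1 else 0)\<close> by simp
    qed
  qed
  also have "\<dots> = (\<Sum>a<d. M $$ (a,a))"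
  proof (rule sum.cong[OF refl])
    fix a assume a: "a \<in> {..<d}"
    have "(\<Sum>b<d. M $$ (a,b) * (if a = b then 1 else 0)) = (\<Sum>b<d. if b = a then M $$ (a,b) else 0)"
      by (rule sum.cong) auto
    also have "\<dots> = M $$ (a,a)" using a by (simp add: sum.delta)
    finally show "(\<Sum>b<d. M $$ (a,b) * (if a = b then 1 else 0)) = M $$ (a,a)" .
  qed
  also have "\<dots> = mtrace M" using M by (simp add: mtrace_def)
  finally show ?thesis ..
qed

lemma spec_sum:
  assumes w: "onb d w" and M: "M \<in> carrier_mat d d"
    and eig: "\<And>k. k < d \<Longrightarrow> M *\<^sub>v w k = \<gamma> k \<cdot>\<^sub>v w k" and a: "a < d" and b: "b < d"
  shows "M $$ (a,b) = (\<Sum>k<d. \<gamma> k * w k $ a * cnj (w k $ b))"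
proof -
  have "M $$ (a,b) = (\<Sum>c<d. M $$ (a,c) * (if c = b then 1 else 0))"
  proof -
    have "(\<Sum>c<d. M $$ (a,c) * (if c = b then 1 else 0)) = (\<Sum>c<d. if c = b then M $$ (a,c) else 0)"
      by (rule sum.cong) auto
    also have "\<dots> = M $$ (a,b)" using b by (simp add: sum.delta)
    finally show ?thesis ..
  qed
  also have "\<dots> = (\<Sum>c<d. M $$ (a,c) * (\<Sum>k<d. w k $ c * cnj (w k $ b)))"
    using onb_complete[OF w _ b] by (intro sum.cong) auto
  also have "\<dots> = (\<Sum>c<d. \<Sum>k<d. M $$ (a,c) * w k $ c * cnj (w k $ b))"
    by (simp add: sum_distrib_left mult.assoc)
  also have "\<dots> = (\<Sum>k<d. \<Sum>c<d. M $$ (a,c) * w k $ c * cnj (w k $ b))" by (rule sum.swap)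
  also have "\<dots> = (\<Sum>k<d. (M *\<^sub>v w k) $ a * cnj (w k $ b))"
  proof (rule sum.cong[OF refl])
    fix k assume "k \<in> {..<d}"
    then have wk: "w k \<in> carrier_vec d" using onb_carrier[OF w] by auto
    show "(\<Sum>c<d. M $$ (a,c) * w k $ c * cnj (w k $ b)) = (M *\<^sub>v w k) $ a * cnj (w k $ b)"
      using mult_vec_index[OF M wk a] by (simp add: sum_distrib_right)
  qed
  also have "\<dots> = (\<Sum>k<d. \<gamma> k * w k $ a * cnj (w k $ b))"
  proof (rule sum.cong[OF refl])
    fix k assume "k \<in> {..<d}"
    then have wk: "w k \<in> carrier_vec d" and k: "k < d" using onb_carrier[OF w] by auto
    show "(M *\<^sub>v w k) $ a * cnj (w k $ b) = \<gamma> k * w k $ a * cnj (w k $ b)"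
      using eig[OF k] wk a by simp
  qed
  finally show ?thesis .
qed

lemma parseval:
  assumes v: "onb d v" and x: "x \<in> carrier_vec d"
  shows "(\<Sum>j<d. cnj (ip (v j) x) * ip (v j) x) = ip x x"
proof -
  have "(\<Sum>j<d. cnj (ip (v j) x) * ip (v j) x) = (\<Sum>j<d. \<Sum>a<d. \<Sum>b<d. v j $ a * cnj (x $ a) * (cnj (v j $ b) * x $ b))"
  proof (rule sum.cong[OF refl])
    fix j assume "j \<in> {..<d}"
    then have vj: "v j \<in> carrier_vec d" using onb_carrier[OF v] by auto
    show "cnj (ip (v j) x) * ip (v j) x = (\<Sum>a<d. \<Sum>b<d. v j $ a * cnj (x $ a) * (cnj (v j $ b) * x $ b))"
      unfolding ip_def using vj by (simp add: sum_distrib_left sum_distrib_right) (rule sum.swap)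
  qed
  also have "\<dots> = (\<Sum>a<d. \<Sum>j<d. \<Sum>b<d. v j $ a * cnj (x $ a) * (cnj (v j $ b) * x $ b))" by (rule sum.swap)
  also have "\<dots> = (\<Sum>a<d. \<Sum>b<d. \<Sum>j<d. v j $ a * cnj (x $ a) * (cnj (v j $ b) * x $ b))"
    by (rule sum.cong[OF refl]) (rule sum.swap)
  also have "\<dots> = (\<Sum>a<d. \<Sum>b<d. cnj (x $ a) * x $ b * (if a = b then 1 else 0))"
  proof (intro sum.cong[OF refl])
    fix a b assume ab: "a \<in> {..<d}" "b \<in> {..<d}"
    have "(\<Sum>j<d. v j $ a * cnj (x $ a) * (cnj (v j $ b) * x $ b)) = cnj (x $ a) * x $ b * (\<Sum>j<d. v j $ a * cnj (v j $ b))"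
      by (simp add: sum_distrib_left ac_simps)
    then show "(\<Sum>j<d. v j $ a * cnj (x $ a) * (cnj (v j $ b) * x $ b)) = cnj (x $ a) * x $ b * (if a = b then 1 else 0)"
      using onb_complete[OF v] ab by simp
  qed
  also have "\<dots> = (\<Sum>a<d. cnj (x $ a) * x $ a)"
  proof (rule sum.cong[OF refl])
    fix a assume a: "a \<in> {..<d}"
    have "(\<Sum>b<d. cnj (x $ a) * x $ b * (if a = b then 1 else 0)) = (\<Sum>b<d. if b = a then cnj (x $ a) * x $ b else 0)"
      by (rule sum.cong) auto
    also have "\<dots> = cnj (x $ a) * x $ a" using a by (simp add: sum.delta)
    finally show "(\<Sum>b<d. cnj (x $ a) * x $ b * (if a = b then 1 else 0)) = cnj (x $ a) * x $ a" .
  qed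
  also have "\<dots> = ip x x" using x by (simp add: ip_def)
  finally show ?thesis .
qed

lemma qform_ip: "A \<in> carrier_mat d d \<Longrightarrow> x \<in> carrier_vec d \<Longrightarrow> qform A x = ip x (A *\<^sub>v x)"
proof -
  assume A: "A \<in> carrier_mat d d" and x: "x \<in> carrier_vec d"
  have "ip x (A *\<^sub>v x) = (\<Sum>i<d. cnj (x $ i) * (\<Sum>j<d. A $$ (i,j) * x $ j))"
    using x mult_vec_index[OF A x] by (simp add: ip_def)
  also have "\<dots> = qform A x" using x by (simp add: qform_def sum_distrib_left mult.assoc)
  finally show ?thesis ..
qed


definition psd :: "nat \<Rightarrow> complex mat \<Rightarrow> bool" where
  "psd d A \<longleftrightarrow> A \<in> carrier_mat d d \<and> adj A = A \<and>
     (\<forall>v \<in> carrier_vec d. Im (qform A v) = 0 \<and> Re (qform A v) \<ge> 0)"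

lemma psd_eig:
  assumes "psd d A"
  shows "\<exists>w lam. onb d w \<and> (\<forall>k<d. A *\<^sub>v w k = complex_of_real (lam k) \<cdot>\<^sub>v w k) \<and> (\<forall>k<d. lam k \<ge> 0)"
proof -
  have A: "A \<in> carrier_mat d d" and h: "adj A = A"
    and q: "\<And>v. v \<in> carrier_vec d \<Longrightarrow> Im (qform A v) = 0 \<and> Re (qform A v) \<ge> 0"
    using assms unfolding psd_def by auto
  obtain w \<mu> where w: "onb d w" and eig: "\<forall>k<d. A *\<^sub>v w k = \<mu> k \<cdot>\<^sub>v w k"
    using spectral[OF A h] by blast
  have mu: "\<mu> k = qform A (w k)" if k: "k < d" for k
  proof -
    have wk: "w k \<in> carrier_vec d" using onb_carrier[OF w k] .
    have "qform A (w k) = ip (w k) (\<mu> k \<cdot>\<^sub>v w k)" using qform_ip[OF A wk] eig k by simp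
    also have "\<dots> = \<mu> k" using ip_smult_right[of "w k" "w k" "\<mu> k"] onb_ip[OF w k k] wk by simp
    finally show ?thesis ..
  qed
  define lam where "lam k = Re (\<mu> k)" for k
  have "\<forall>k<d. A *\<^sub>v w k = complex_of_real (lam k) \<cdot>\<^sub>v w k"
  proof (intro allI impI)
    fix k assume k: "k < d"
    have "Im (\<mu> k) = 0" using mu[OF k] q[OF onb_carrier[OF w k]] by simp
    then have "complex_of_real (lam k) = \<mu> k" unfolding lam_def by (simp add: complex_eq_iff)
    then show "A *\<^sub>v w k = complex_of_real (lam k) \<cdot>\<^sub>v w k" using eig k by simp
  qed
  moreover have "\<forall>k<d. lam k \<ge> 0" using mu q onb_carrier[OF w] unfolding lam_def by auto
  ultimately show ?thesis using w by blast
qed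

lemma psd_entropy:
  assumes A: "A \<in> carrier_mat d d" and w: "onb d w"
    and eig: "\<forall>k<d. A *\<^sub>v w k = complex_of_real (lam k) \<cdot>\<^sub>v w k"
  shows "vN_entropy A = - (\<Sum>k<d. lam k * ln (lam k))"
  using eig_entropy[OF A w, of "\<lambda>k. complex_of_real (lam k)"] eig by simp

lemma psd_trace:
  assumes A: "A \<in> carrier_mat d d" and w: "onb d w"
    and eig: "\<forall>k<d. A *\<^sub>v w k = complex_of_real (lam k) \<cdot>\<^sub>v w k"
  shows "mtrace A = complex_of_real (\<Sum>k<d. lam k)"
proof -
  have "mtrace A = (\<Sum>k<d. ip (w k) (A *\<^sub>v w k))" by (rule onb_trace[OF w A])
  also have "\<dots> = (\<Sum>k<d. complex_of_real (lam k))"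
  proof (rule sum.cong[OF refl])
    fix k assume "k \<in> {..<d}"
    then have k: "k < d" by simp
    have wk: "w k \<in> carrier_vec d" using onb_carrier[OF w k] .
    show "ip (w k) (A *\<^sub>v w k) = complex_of_real (lam k)"
      using eig k ip_smult_right[of "w k" "w k"] onb_ip[OF w k k] wk by simp
  qed
  finally show ?thesis by (simp add: of_real_sum)
qed

lemma entropy_nonneg:
  assumes p: "psd d A" and tr: "mtrace A = 1"
  shows "vN_entropy A \<ge> 0"
proof -
  have A: "A \<in> carrier_mat d d" using p unfolding psd_def by auto
  obtain w lam where w: "onb d w" and eig: "\<forall>k<d. A *\<^sub>v w k = complex_of_real (lam k) \<cdot>\<^sub>v w k"
    and l0: "\<forall>k<d. lam k \<ge> 0" using psd_eig[OF p] by blast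
  have s1: "(\<Sum>k<d. lam k) = 1" using psd_trace[OF A w eig] tr
    by (metis of_real_eq_1_iff)
  have "lam k * ln (lam k) \<le> 0" if k: "k < d" for k
  proof (cases "lam k = 0")
    case False
    then have lp: "lam k > 0" using l0 k by auto
    have "lam k \<le> (\<Sum>k<d. lam k)" by (rule member_le_sum) (use k l0 in auto)
    then have "lam k \<le> 1" using s1 by simp
    then have "ln (lam k) \<le> 0" using lp by simp
    then show ?thesis using lp by (simp add: mult_nonneg_nonpos)
  qed simp
  then have "(\<Sum>k<d. lam k * ln (lam k)) \<le> 0" by (intro sum_nonpos) auto
  then show ?thesis using psd_entropy[OF A w eig] by simp
qed

lemma ip_spec:
  assumes w: "onb d w" and A: "A \<in> carrier_mat d d"
    and Aab: "\<And>a b. a < d \<Longrightarrow> b < d \<Longrightarrow> A $$ (a,b) = (\<Sum>k<d. \<gamma> k * w k $ a * cnj (w k $ b))"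
    and x: "x \<in> carrier_vec d" and y: "y \<in> carrier_vec d"
  shows "ip x (A *\<^sub>v y) = (\<Sum>k<d. \<gamma> k * (cnj (ip (w k) x) * ip (w k) y))"
proof -
  have "ip x (A *\<^sub>v y) = (\<Sum>a<d. cnj (x $ a) * (\<Sum>b<d. A $$ (a,b) * y $ b))"
    using x mult_vec_index[OF A y] by (simp add: ip_def)
  also have "\<dots> = (\<Sum>a<d. \<Sum>b<d. \<Sum>k<d. \<gamma> k * ((cnj (x $ a) * w k $ a) * (cnj (w k $ b) * y $ b)))"
  proof (intro sum.cong[OF refl])
    fix a assume a: "a \<in> {..<d}"
    show "cnj (x $ a) * (\<Sum>b<d. A $$ (a,b) * y $ b) = (\<Sum>b<d. \<Sum>k<d. \<gamma> k * ((cnj (x $ a) * w k $ a) * (cnj (w k $ b) * y $ b)))"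
      unfolding sum_distrib_left
    proof (rule sum.cong[OF refl])
      fix b assume b: "b \<in> {..<d}"
      show "cnj (x $ a) * (A $$ (a,b) * y $ b) = (\<Sum>k<d. \<gamma> k * ((cnj (x $ a) * w k $ a) * (cnj (w k $ b) * y $ b)))"
        using Aab a b unfolding sum_distrib_left sum_distrib_right
        by (simp add: sum_distrib_left sum_distrib_right) (rule sum.cong[OF refl], simp only: ac_simps)
    qed
  qed
  also have "\<dots> = (\<Sum>a<d. \<Sum>k<d. \<Sum>b<d. \<gamma> k * ((cnj (x $ a) * w k $ a) * (cnj (w k $ b) * y $ b)))"
    by (rule sum.cong[OF refl]) (rule sum.swap)
  also have "\<dots> = (\<Sum>k<d. \<Sum>a<d. \<Sum>b<d. \<gamma> k * ((cnj (x $ a) * w k $ a) * (cnj (w k $ b) * y $ b)))"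
    by (rule sum.swap)
  also have "\<dots> = (\<Sum>k<d. \<gamma> k * (cnj (ip (w k) x) * ip (w k) y))"
  proof (rule sum.cong[OF refl])
    fix k assume "k \<in> {..<d}"
    then have wk: "w k \<in> carrier_vec d" using onb_carrier[OF w] by auto
    have e1: "cnj (ip (w k) x) = (\<Sum>a<d. cnj (x $ a) * w k $ a)" using wk by (simp add: ip_def mult.commute)
    have e2: "ip (w k) y = (\<Sum>b<d. cnj (w k $ b) * y $ b)" using wk by (simp add: ip_def)
    show "(\<Sum>a<d. \<Sum>b<d. \<gamma> k * ((cnj (x $ a) * w k $ a) * (cnj (w k $ b) * y $ b))) = \<gamma> k * (cnj (ip (w k) x) * ip (w k) y)"
      unfolding e1 e2 sum_distrib_left sum_distrib_right by (rule sum.swap)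
  qed
  finally show ?thesis .
qed


lemma cnj_mult_self: "cnj z * z = complex_of_real ((cmod z)^2)"
  using complex_norm_square[of z] by (simp add: mult.commute)

lemma entropy_le_diag:
  assumes p: "psd d A" and v: "onb d v"
  shows "vN_entropy A \<le> - (\<Sum>j<d. Re (ip (v j) (A *\<^sub>v v j)) * ln (Re (ip (v j) (A *\<^sub>v v j))))"
proof -
  have A: "A \<in> carrier_mat d d" using p unfolding psd_def by auto
  obtain w lam where w: "onb d w" and eig: "\<forall>k<d. A *\<^sub>v w k = complex_of_real (lam k) \<cdot>\<^sub>v w k"
    and l0: "\<forall>k<d. lam k \<ge> 0" using psd_eig[OF p] by blast
  define B where "B j k = (cmod (ip (w k) (v j)))^2" for j k
  define q where "q j = Re (ip (v j) (A *\<^sub>v v j))" for j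
  have Aab: "\<And>a b. a < d \<Longrightarrow> b < d \<Longrightarrow> A $$ (a,b) = (\<Sum>k<d. complex_of_real (lam k) * w k $ a * cnj (w k $ b))"
    by (rule spec_sum[OF w A]) (use eig in auto)
  have q: "q j = (\<Sum>k<d. B j k * lam k)" if j: "j < d" for j
  proof -
    have vj: "v j \<in> carrier_vec d" using onb_carrier[OF v j] .
    have "ip (v j) (A *\<^sub>v v j) = (\<Sum>k<d. complex_of_real (lam k) * (cnj (ip (w k) (v j)) * ip (w k) (v j)))"
      by (rule ip_spec[OF w A Aab vj vj])
    also have "\<dots> = complex_of_real (\<Sum>k<d. B j k * lam k)"
      unfolding cnj_mult_self B_def of_real_sum by (simp add: mult.commute)
    finally show ?thesis unfolding q_def by simp
  qed
  have B0: "B j k \<ge> 0" for j k unfolding B_def by simp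
  have rows: "(\<Sum>k<d. B j k) = 1" if j: "j < d" for j
  proof -
    have vj: "v j \<in> carrier_vec d" using onb_carrier[OF v j] .
    have "complex_of_real (\<Sum>k<d. B j k) = (\<Sum>k<d. cnj (ip (w k) (v j)) * ip (w k) (v j))"
      unfolding cnj_mult_self B_def of_real_sum ..
    also have "\<dots> = ip (v j) (v j)" by (rule parseval[OF w vj])
    also have "\<dots> = 1" using onb_ip[OF v j j] by simp
    finally show ?thesis by (metis of_real_eq_1_iff)
  qed
  have cols: "(\<Sum>j<d. B j k) = 1" if k: "k < d" for k
  proof -
    have wk: "w k \<in> carrier_vec d" using onb_carrier[OF w k] .
    have "B j k = (cmod (ip (v j) (w k)))^2" if j: "j < d" for j
      using ip_cnj[OF onb_carrier[OF w k] onb_carrier[OF v j]] unfolding B_def by simp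
    then have "complex_of_real (\<Sum>j<d. B j k) = (\<Sum>j<d. cnj (ip (v j) (w k)) * ip (v j) (w k))"
      unfolding cnj_mult_self of_real_sum by (intro sum.cong) auto
    also have "\<dots> = ip (w k) (w k)" by (rule parseval[OF v wk])
    also have "\<dots> = 1" using onb_ip[OF w k k] by simp
    finally show ?thesis by (metis of_real_eq_1_iff)
  qed
  have jen: "q j * ln (q j) \<le> (\<Sum>k<d. B j k * (lam k * ln (lam k)))" if j: "j < d" for j
    unfolding q[OF j] by (rule jensen_xlnx) (use B0 rows[OF j] l0 in auto)
  have "(\<Sum>j<d. q j * ln (q j)) \<le> (\<Sum>j<d. \<Sum>k<d. B j k * (lam k * ln (lam k)))"
    by (rule sum_mono) (use jen in auto)
  also have "\<dots> = (\<Sum>k<d. \<Sum>j<d. B j k * (lam k * ln (lam k)))" by (rule sum.swap)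
  also have "\<dots> = (\<Sum>k<d. lam k * ln (lam k))"
  proof (rule sum.cong[OF refl])
    fix k assume "k \<in> {..<d}"
    then have "(\<Sum>j<d. B j k) = 1" using cols by auto
    then show "(\<Sum>j<d. B j k * (lam k * ln (lam k))) = lam k * ln (lam k)"
      by (simp add: sum_distrib_right[symmetric])
  qed
  finally have "(\<Sum>j<d. q j * ln (q j)) \<le> (\<Sum>k<d. lam k * ln (lam k))" .
  then show ?thesis using psd_entropy[OF A w eig] unfolding q_def by simp
qed




definition tens :: "nat \<Rightarrow> nat \<Rightarrow> complex vec \<Rightarrow> complex vec \<Rightarrow> complex vec" where
  "tens m n x y = vec (m * n) (\<lambda>a. x $ (a div n) * y $ (a mod n))"

lemma tens_carrier[simp]: "tens m n x y \<in> carrier_vec (m * n)"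
  by (simp add: tens_def)

lemma tens_dim[simp]: "dim_vec (tens m n x y) = m * n"
  by (simp add: tens_def)

lemma idx_bound: "i < m \<Longrightarrow> j < n \<Longrightarrow> i * n + j < m * (n::nat)"
proof -
  assume "i < m" "j < n"
  then have "i * n + j < i * n + n" by simp
  also have "\<dots> = Suc i * n" by simp
  also have "\<dots> \<le> m * n" using \<open>i < m\<close> by (intro mult_right_mono) auto
  finally show ?thesis .
qed

lemma idx_div[simp]: "j < n \<Longrightarrow> (i * n + j) div n = (i::nat)"
  by simp

lemma idx_mod[simp]: "j < n \<Longrightarrow> (i * n + j) mod n = (j::nat)"
  by simp

lemma tens_index: "i < m \<Longrightarrow> j < n \<Longrightarrow> tens m n x y $ (i * n + j) = x $ i * y $ j"
  by (simp add: tens_def idx_bound)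

lemma ip_tens:
  assumes "x \<in> carrier_vec m" "x' \<in> carrier_vec m" "y \<in> carrier_vec n" "y' \<in> carrier_vec n"
  shows "ip (tens m n x y) (tens m n x' y') = ip x x' * ip y y'"
proof -
  have "ip (tens m n x y) (tens m n x' y') = (\<Sum>a<m*n. cnj (tens m n x y $ a) * tens m n x' y' $ a)"
    by (simp add: ip_def)
  also have "\<dots> = (\<Sum>i<m. \<Sum>j<n. cnj (x $ i * y $ j) * (x' $ i * y' $ j))"
    by (simp add: sum_mn tens_index)
  also have "\<dots> = (\<Sum>i<m. cnj (x $ i) * x' $ i) * (\<Sum>j<n. cnj (y $ j) * y' $ j)"
    by (simp add: sum_product ac_simps)
  also have "\<dots> = ip x x' * ip y y'" using assms by (simp add: ip_def)
  finally show ?thesis .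
qed

lemma quad_exp:
  assumes R: "R \<in> carrier_mat (m*n) (m*n)"
  shows "ip (tens m n x y) (R *\<^sub>v tens m n x' y') =
    (\<Sum>a<m. \<Sum>l<n. \<Sum>b<m. \<Sum>l'<n. cnj (x $ a) * cnj (y $ l) * R $$ (a*n+l, b*n+l') * x' $ b * y' $ l')"
proof -
  have "ip (tens m n x y) (R *\<^sub>v tens m n x' y') =
     (\<Sum>r<m*n. cnj (tens m n x y $ r) * (\<Sum>s<m*n. R $$ (r,s) * tens m n x' y' $ s))"
    unfolding ip_def using mult_vec_index[OF R tens_carrier] by simp
  also have "\<dots> = (\<Sum>a<m. \<Sum>l<n. cnj (x $ a * y $ l) * (\<Sum>b<m. \<Sum>l'<n. R $$ (a*n+l, b*n+l') * (x' $ b * y' $ l')))"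
    by (simp add: sum_mn tens_index)
  also have "\<dots> = (\<Sum>a<m. \<Sum>l<n. \<Sum>b<m. \<Sum>l'<n. cnj (x $ a) * cnj (y $ l) * R $$ (a*n+l, b*n+l') * x' $ b * y' $ l')"
    by (simp add: sum_distrib_left ac_simps)
  finally show ?thesis .
qed


lemma swap_in4: "(\<Sum>j\<in>J. \<Sum>a\<in>A. \<Sum>l\<in>L. \<Sum>b\<in>B. \<Sum>l'\<in>L'. f j a l b l') =
   (\<Sum>a\<in>A. \<Sum>l\<in>L. \<Sum>b\<in>B. \<Sum>l'\<in>L'. \<Sum>j\<in>J. f j a l b l')"
proof -
  have "(\<Sum>j\<in>J. \<Sum>a\<in>A. \<Sum>l\<in>L. \<Sum>b\<in>B. \<Sum>l'\<in>L'. f j a l b l') =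
     (\<Sum>a\<in>A. \<Sum>j\<in>J. \<Sum>l\<in>L. \<Sum>b\<in>B. \<Sum>l'\<in>L'. f j a l b l')" by (rule sum.swap)
  also have "\<dots> = (\<Sum>a\<in>A. \<Sum>l\<in>L. \<Sum>j\<in>J. \<Sum>b\<in>B. \<Sum>l'\<in>L'. f j a l b l')"
    by (rule sum.cong[OF refl], rule sum.swap)
  also have "\<dots> = (\<Sum>a\<in>A. \<Sum>l\<in>L. \<Sum>b\<in>B. \<Sum>j\<in>J. \<Sum>l'\<in>L'. f j a l b l')"
    by (rule sum.cong[OF refl], rule sum.cong[OF refl], rule sum.swap)
  also have "\<dots> = (\<Sum>a\<in>A. \<Sum>l\<in>L. \<Sum>b\<in>B. \<Sum>l'\<in>L'. \<Sum>j\<in>J. f j a l b l')"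
    by (rule sum.cong[OF refl], rule sum.cong[OF refl], rule sum.cong[OF refl], rule sum.swap)
  finally show ?thesis .
qed

lemma pt_P:
  assumes R: "R \<in> carrier_mat (m*n) (m*n)" and v: "onb n v"
    and x: "x \<in> carrier_vec m" and x': "x' \<in> carrier_vec m"
  shows "ip x (ptrace_P m n R *\<^sub>v x') = (\<Sum>j<n. ip (tens m n x (v j)) (R *\<^sub>v tens m n x' (v j)))"
proof -
  have P: "ptrace_P m n R \<in> carrier_mat m m" by (simp add: ptrace_P_def)
  have "(\<Sum>j<n. ip (tens m n x (v j)) (R *\<^sub>v tens m n x' (v j))) =
    (\<Sum>j<n. \<Sum>a<m. \<Sum>l<n. \<Sum>b<m. \<Sum>l'<n. cnj (x $ a) * cnj (v j $ l) * R $$ (a*n+l, b*n+l') * x' $ b * v j $ l')"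
    by (simp add: quad_exp[OF R])
  also have "\<dots> = (\<Sum>a<m. \<Sum>l<n. \<Sum>b<m. \<Sum>l'<n. \<Sum>j<n. cnj (x $ a) * cnj (v j $ l) * R $$ (a*n+l, b*n+l') * x' $ b * v j $ l')"
    by (rule swap_in4)
  also have "\<dots> = (\<Sum>a<m. \<Sum>l<n. \<Sum>b<m. \<Sum>l'<n. (cnj (x $ a) * R $$ (a*n+l, b*n+l') * x' $ b) * (if l = l' then 1 else 0))"
  proof (intro sum.cong[OF refl])
    fix a l b l' assume l: "l \<in> {..<n}" and l': "l' \<in> {..<n}"
    have "(\<Sum>j<n. cnj (x $ a) * cnj (v j $ l) * R $$ (a*n+l, b*n+l') * x' $ b * v j $ l') =
      (cnj (x $ a) * R $$ (a*n+l, b*n+l') * x' $ b) * (\<Sum>j<n. cnj (v j $ l) * v j $ l')"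
      unfolding sum_distrib_left by (rule sum.cong[OF refl]) (simp only: ac_simps)
    then show "(\<Sum>j<n. cnj (x $ a) * cnj (v j $ l) * R $$ (a*n+l, b*n+l') * x' $ b * v j $ l') =
      (cnj (x $ a) * R $$ (a*n+l, b*n+l') * x' $ b) * (if l = l' then 1 else 0)"
      using onb_complete'[OF v] l l' by simp
  qed
  also have "\<dots> = (\<Sum>a<m. \<Sum>l<n. \<Sum>b<m. cnj (x $ a) * R $$ (a*n+l, b*n+l) * x' $ b)"
  proof (intro sum.cong[OF refl])
    fix a l b assume l: "l \<in> {..<n}"
    have "(\<Sum>l'<n. (cnj (x $ a) * R $$ (a*n+l, b*n+l') * x' $ b) * (if l = l' then 1 else 0)) =
       (\<Sum>l'<n. if l' = l then cnj (x $ a) * R $$ (a*n+l, b*n+l') * x' $ b else 0)"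
      by (rule sum.cong) auto
    also have "\<dots> = cnj (x $ a) * R $$ (a*n+l, b*n+l) * x' $ b" using l by (simp add: sum.delta)
    finally show "(\<Sum>l'<n. (cnj (x $ a) * R $$ (a*n+l, b*n+l') * x' $ b) * (if l = l' then 1 else 0)) =
      cnj (x $ a) * R $$ (a*n+l, b*n+l) * x' $ b" .
  qed
  also have "\<dots> = (\<Sum>a<m. \<Sum>b<m. \<Sum>l<n. cnj (x $ a) * R $$ (a*n+l, b*n+l) * x' $ b)"
    by (rule sum.cong[OF refl], rule sum.swap)
  also have "\<dots> = ip x (ptrace_P m n R *\<^sub>v x')"
  proof -
    have "ip x (ptrace_P m n R *\<^sub>v x') = (\<Sum>a<m. cnj (x $ a) * (\<Sum>b<m. ptrace_P m n R $$ (a,b) * x' $ b))"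
      unfolding ip_def using x mult_vec_index[OF P x'] by simp
    also have "\<dots> = (\<Sum>a<m. \<Sum>b<m. \<Sum>l<n. cnj (x $ a) * R $$ (a*n+l, b*n+l) * x' $ b)"
      by (simp add: ptrace_P_def sum_distrib_left sum_distrib_right ac_simps)
    finally show ?thesis ..
  qed
  finally show ?thesis ..
qed

lemma pt_C:
  assumes R: "R \<in> carrier_mat (m*n) (m*n)" and u: "onb m u"
    and y: "y \<in> carrier_vec n" and y': "y' \<in> carrier_vec n"
  shows "ip y (ptrace_C m n R *\<^sub>v y') = (\<Sum>i<m. ip (tens m n (u i) y) (R *\<^sub>v tens m n (u i) y'))"
proof -
  have P: "ptrace_C m n R \<in> carrier_mat n n" by (simp add: ptrace_C_def)
  have "(\<Sum>i<m. ip (tens m n (u i) y) (R *\<^sub>v tens m n (u i) y')) =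
    (\<Sum>i<m. \<Sum>a<m. \<Sum>l<n. \<Sum>b<m. \<Sum>l'<n. cnj (u i $ a) * cnj (y $ l) * R $$ (a*n+l, b*n+l') * u i $ b * y' $ l')"
    by (simp add: quad_exp[OF R])
  also have "\<dots> = (\<Sum>a<m. \<Sum>l<n. \<Sum>b<m. \<Sum>l'<n. \<Sum>i<m. cnj (u i $ a) * cnj (y $ l) * R $$ (a*n+l, b*n+l') * u i $ b * y' $ l')"
    by (rule swap_in4)
  also have "\<dots> = (\<Sum>a<m. \<Sum>l<n. \<Sum>b<m. \<Sum>l'<n. (cnj (y $ l) * R $$ (a*n+l, b*n+l') * y' $ l') * (if a = b then 1 else 0))"
  proof (intro sum.cong[OF refl])
    fix a l b l' assume a: "a \<in> {..<m}" and b: "b \<in> {..<m}"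
    have "(\<Sum>i<m. cnj (u i $ a) * cnj (y $ l) * R $$ (a*n+l, b*n+l') * u i $ b * y' $ l') =
      (cnj (y $ l) * R $$ (a*n+l, b*n+l') * y' $ l') * (\<Sum>i<m. cnj (u i $ a) * u i $ b)"
      unfolding sum_distrib_left by (rule sum.cong[OF refl]) (simp only: ac_simps)
    then show "(\<Sum>i<m. cnj (u i $ a) * cnj (y $ l) * R $$ (a*n+l, b*n+l') * u i $ b * y' $ l') =
      (cnj (y $ l) * R $$ (a*n+l, b*n+l') * y' $ l') * (if a = b then 1 else 0)"
      using onb_complete'[OF u] a b by simp
  qed
  also have "\<dots> = (\<Sum>a<m. \<Sum>l<n. \<Sum>l'<n. \<Sum>b<m. (cnj (y $ l) * R $$ (a*n+l, b*n+l') * y' $ l') * (if a = b then 1 else 0))"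
    by (rule sum.cong[OF refl], rule sum.cong[OF refl], rule sum.swap)
  also have "\<dots> = (\<Sum>a<m. \<Sum>l<n. \<Sum>l'<n. cnj (y $ l) * R $$ (a*n+l, a*n+l') * y' $ l')"
  proof (intro sum.cong[OF refl])
    fix a l l' assume a: "a \<in> {..<m}"
    have "(\<Sum>b<m. (cnj (y $ l) * R $$ (a*n+l, b*n+l') * y' $ l') * (if a = b then 1 else 0)) =
       (\<Sum>b<m. if b = a then cnj (y $ l) * R $$ (a*n+l, b*n+l') * y' $ l' else 0)"
      by (rule sum.cong) auto
    also have "\<dots> = cnj (y $ l) * R $$ (a*n+l, a*n+l') * y' $ l'" using a by (simp add: sum.delta)
    finally show "(\<Sum>b<m. (cnj (y $ l) * R $$ (a*n+l, b*n+l') * y' $ l') * (if a = b then 1 else 0)) =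
      cnj (y $ l) * R $$ (a*n+l, a*n+l') * y' $ l'" .
  qed
  also have "\<dots> = (\<Sum>l<n. \<Sum>a<m. \<Sum>l'<n. cnj (y $ l) * R $$ (a*n+l, a*n+l') * y' $ l')"
    by (rule sum.swap)
  also have "\<dots> = (\<Sum>l<n. \<Sum>l'<n. \<Sum>a<m. cnj (y $ l) * R $$ (a*n+l, a*n+l') * y' $ l')"
    by (rule sum.cong[OF refl], rule sum.swap)
  also have "\<dots> = ip y (ptrace_C m n R *\<^sub>v y')"
  proof -
    have "ip y (ptrace_C m n R *\<^sub>v y') = (\<Sum>l<n. cnj (y $ l) * (\<Sum>l'<n. ptrace_C m n R $$ (l,l') * y' $ l'))"
      unfolding ip_def using y mult_vec_index[OF P y'] by simp
    also have "\<dots> = (\<Sum>l<n. \<Sum>l'<n. \<Sum>a<m. cnj (y $ l) * R $$ (a*n+l, a*n+l') * y' $ l')"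
      by (simp add: ptrace_C_def sum_distrib_left sum_distrib_right ac_simps)
    finally show ?thesis ..
  qed
  finally show ?thesis ..
qed


lemma KR_entry:
  assumes R: "R \<in> carrier_mat (m*n) (m*n)" and w: "w \<in> carrier_vec m"
    and a: "a < m" and l: "l < n" and c: "c < m*n"
  shows "(kron m n (proj w) (1\<^sub>m n) * R) $$ (a*n+l, c) = (\<Sum>b<m. w $ a * cnj (w $ b) * R $$ (b*n+l, c))"
proof -
  have K: "kron m n (proj w) (1\<^sub>m n) \<in> carrier_mat (m*n) (m*n)" by (simp add: kron_def)
  have "(kron m n (proj w) (1\<^sub>m n) * R) $$ (a*n+l, c) = (\<Sum>s<m*n. kron m n (proj w) (1\<^sub>m n) $$ (a*n+l, s) * R $$ (s, c))"
    by (rule mult_mat_index[OF K R idx_bound[OF a l] c])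
  also have "\<dots> = (\<Sum>b<m. \<Sum>l'<n. (w $ a * cnj (w $ b) * (if l = l' then 1 else 0)) * R $$ (b*n+l', c))"
    unfolding sum_mn using a l w by (intro sum.cong refl) (simp add: kron_def idx_bound proj_def)
  also have "\<dots> = (\<Sum>b<m. w $ a * cnj (w $ b) * R $$ (b*n+l, c))"
  proof (rule sum.cong[OF refl])
    fix b assume "b \<in> {..<m}"
    have "(\<Sum>l'<n. (w $ a * cnj (w $ b) * (if l = l' then 1 else 0)) * R $$ (b*n+l', c)) =
      (\<Sum>l'<n. if l' = l then w $ a * cnj (w $ b) * R $$ (b*n+l', c) else 0)"
      by (rule sum.cong) auto
    also have "\<dots> = w $ a * cnj (w $ b) * R $$ (b*n+l, c)" using l by (simp add: sum.delta)
    finally show "(\<Sum>l'<n. (w $ a * cnj (w $ b) * (if l = l' then 1 else 0)) * R $$ (b*n+l', c)) =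
      w $ a * cnj (w $ b) * R $$ (b*n+l, c)" .
  qed
  finally show ?thesis .
qed

lemma pt_meas:
  assumes R: "R \<in> carrier_mat (m*n) (m*n)" and w: "w \<in> carrier_vec m"
    and y: "y \<in> carrier_vec n" and y': "y' \<in> carrier_vec n"
  shows "ip y (ptrace_C m n (kron m n (proj w) (1\<^sub>m n) * R) *\<^sub>v y') = ip (tens m n w y) (R *\<^sub>v tens m n w y')"
proof -
  let ?G = "ptrace_C m n (kron m n (proj w) (1\<^sub>m n) * R)"
  have G: "?G \<in> carrier_mat n n" by (simp add: ptrace_C_def)
  have Ge: "?G $$ (l,l') = (\<Sum>a<m. \<Sum>b<m. w $ a * cnj (w $ b) * R $$ (b*n+l, a*n+l'))" if l: "l < n" and l': "l' < n" for l l'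
    using l l' KR_entry[OF R w _ l idx_bound] by (simp add: ptrace_C_def)
  have "ip y (?G *\<^sub>v y') = (\<Sum>l<n. cnj (y $ l) * (\<Sum>l'<n. ?G $$ (l,l') * y' $ l'))"
    unfolding ip_def using y mult_vec_index[OF G y'] by simp
  also have "\<dots> = (\<Sum>l<n. \<Sum>l'<n. \<Sum>a<m. \<Sum>b<m. cnj (w $ b) * cnj (y $ l) * R $$ (b*n+l, a*n+l') * w $ a * y' $ l')"
    by (simp add: Ge sum_distrib_left sum_distrib_right ac_simps)
  also have "\<dots> = (\<Sum>l<n. \<Sum>l'<n. \<Sum>b<m. \<Sum>a<m. cnj (w $ b) * cnj (y $ l) * R $$ (b*n+l, a*n+l') * w $ a * y' $ l')"
    by (rule sum.cong[OF refl], rule sum.cong[OF refl], rule sum.swap)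
  also have "\<dots> = (\<Sum>l<n. \<Sum>b<m. \<Sum>l'<n. \<Sum>a<m. cnj (w $ b) * cnj (y $ l) * R $$ (b*n+l, a*n+l') * w $ a * y' $ l')"
    by (rule sum.cong[OF refl], rule sum.swap)
  also have "\<dots> = (\<Sum>l<n. \<Sum>b<m. \<Sum>a<m. \<Sum>l'<n. cnj (w $ b) * cnj (y $ l) * R $$ (b*n+l, a*n+l') * w $ a * y' $ l')"
    by (rule sum.cong[OF refl], rule sum.cong[OF refl], rule sum.swap)
  also have "\<dots> = (\<Sum>b<m. \<Sum>l<n. \<Sum>a<m. \<Sum>l'<n. cnj (w $ b) * cnj (y $ l) * R $$ (b*n+l, a*n+l') * w $ a * y' $ l')"
    by (rule sum.swap)
  also have "\<dots> = ip (tens m n w y) (R *\<^sub>v tens m n w y')"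
    by (simp add: quad_exp[OF R])
  finally show ?thesis .
qed


lemma mtrace_ptrace_C: "R \<in> carrier_mat (m*n) (m*n) \<Longrightarrow> mtrace (ptrace_C m n R) = mtrace R"
proof -
  assume R: "R \<in> carrier_mat (m*n) (m*n)"
  have "mtrace R = (\<Sum>a<m. \<Sum>l<n. R $$ (a*n+l, a*n+l))" using R by (simp add: mtrace_def sum_mn)
  also have "\<dots> = (\<Sum>l<n. \<Sum>a<m. R $$ (a*n+l, a*n+l))" by (rule sum.swap)
  also have "\<dots> = mtrace (ptrace_C m n R)" by (simp add: mtrace_def ptrace_C_def)
  finally show ?thesis ..
qed

lemma div_less_m: "r < m * n \<Longrightarrow> r div n < (m::nat)"
  by (simp add: less_mult_imp_div_less)

lemma mod_less_n: "r < m * n \<Longrightarrow> r mod n < (n::nat)"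
  by (metis mod_less_divisor mult_zero_right not_gr_zero not_less_zero)

lemma kron_proj:
  assumes x: "x \<in> carrier_vec m" and y: "y \<in> carrier_vec n"
  shows "kron m n (proj x) (proj y) = proj (tens m n x y)"
proof (rule eq_matI)
  fix r c assume "r < dim_row (proj (tens m n x y))" "c < dim_col (proj (tens m n x y))"
  then have r: "r < m*n" and c: "c < m*n" by (auto simp: proj_def)
  show "kron m n (proj x) (proj y) $$ (r, c) = proj (tens m n x y) $$ (r, c)"
    using r c x y div_less_m[OF r] div_less_m[OF c] mod_less_n[OF r] mod_less_n[OF c]
    by (simp add: kron_def proj_def tens_def)
qed (auto simp: kron_def proj_def)

lemma proj_sandwich:
  assumes R: "R \<in> carrier_mat d d" and z: "z \<in> carrier_vec d"
  shows "proj z * R * proj z = qform R z \<cdot>\<^sub>m proj z"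
proof -
  have P: "proj z \<in> carrier_mat d d" using z by (simp add: proj_def)
  have PR: "proj z * R \<in> carrier_mat d d" using P R by simp
  show ?thesis
  proof (rule eq_matI)
    fix r c assume "r < dim_row (qform R z \<cdot>\<^sub>m proj z)" "c < dim_col (qform R z \<cdot>\<^sub>m proj z)"
    then have r: "r < d" and c: "c < d" using z by (auto simp: proj_def)
    have e1: "(proj z * R) $$ (r,t) = (\<Sum>s<d. z $ r * cnj (z $ s) * R $$ (s,t))" if t: "t < d" for t
      using mult_mat_index[OF P R r t] r z by (simp add: proj_def)
    have "(proj z * R * proj z) $$ (r,c) = (\<Sum>t<d. (proj z * R) $$ (r,t) * proj z $$ (t,c))"
      by (rule mult_mat_index[OF PR P r c])
    also have "\<dots> = (\<Sum>t<d. (\<Sum>s<d. z $ r * cnj (z $ s) * R $$ (s,t)) * (z $ t * cnj (z $ c)))"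
      using e1 c z by (intro sum.cong refl) (simp add: proj_def)
    also have "\<dots> = (\<Sum>t<d. \<Sum>s<d. (z $ r * cnj (z $ c)) * (cnj (z $ s) * R $$ (s,t) * z $ t))"
      unfolding sum_distrib_right by (intro sum.cong refl) (simp only: ac_simps)
    also have "\<dots> = (\<Sum>s<d. \<Sum>t<d. (z $ r * cnj (z $ c)) * (cnj (z $ s) * R $$ (s,t) * z $ t))"
      by (rule sum.swap)
    also have "\<dots> = qform R z * (z $ r * cnj (z $ c))"
      using z by (simp add: qform_def sum_distrib_left sum_distrib_right mult.commute)
    also have "\<dots> = (qform R z \<cdot>\<^sub>m proj z) $$ (r,c)" using r c z by (simp add: proj_def)
    finally show "(proj z * R * proj z) $$ (r,c) = (qform R z \<cdot>\<^sub>m proj z) $$ (r,c)" .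
  qed (use z in \<open>auto simp: proj_def\<close>)
qed

lemma spec_eig:
  assumes w: "onb d w" and M: "M \<in> carrier_mat d d"
    and Me: "\<And>a b. a < d \<Longrightarrow> b < d \<Longrightarrow> M $$ (a,b) = (\<Sum>k<d. \<gamma> k * w k $ a * cnj (w k $ b))"
    and l: "l < d"
  shows "M *\<^sub>v w l = \<gamma> l \<cdot>\<^sub>v w l"
proof (rule eq_vecI)
  have wl: "w l \<in> carrier_vec d" using onb_carrier[OF w l] .
  fix r assume "r < dim_vec (\<gamma> l \<cdot>\<^sub>v w l)"
  then have r: "r < d" using wl by simp
  have "(M *\<^sub>v w l) $ r = (\<Sum>c<d. M $$ (r,c) * w l $ c)" by (rule mult_vec_index[OF M wl r])
  also have "\<dots> = (\<Sum>c<d. \<Sum>k<d. \<gamma> k * w k $ r * (cnj (w k $ c) * w l $ c))"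
    using Me r by (simp add: sum_distrib_right mult.assoc)
  also have "\<dots> = (\<Sum>k<d. \<Sum>c<d. \<gamma> k * w k $ r * (cnj (w k $ c) * w l $ c))" by (rule sum.swap)
  also have "\<dots> = (\<Sum>k<d. \<gamma> k * w k $ r * ip (w k) (w l))"
  proof (rule sum.cong[OF refl])
    fix k assume "k \<in> {..<d}"
    then have "dim_vec (w k) = d" using onb_carrier[OF w] by auto
    then show "(\<Sum>c<d. \<gamma> k * w k $ r * (cnj (w k $ c) * w l $ c)) = \<gamma> k * w k $ r * ip (w k) (w l)"
      by (simp add: ip_def sum_distrib_left)
  qed
  also have "\<dots> = (\<Sum>k<d. \<gamma> k * w k $ r * (if l = k then 1 else 0))"
    using onb_ip[OF w _ l] by (intro sum.cong refl) auto
  also have "\<dots> = \<gamma> l * w l $ r" using sum_delta_nat[OF l, of "\<lambda>k. \<gamma> k * w k $ r"] by simp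
  finally show "(M *\<^sub>v w l) $ r = (\<gamma> l \<cdot>\<^sub>v w l) $ r" using r wl by simp
qed (use M onb_carrier[OF w l] in simp)

lemma ip_unit:
  assumes M: "M \<in> carrier_mat d d" and a: "a < d" and b: "b < d"
  shows "ip (unit_vec d a) (M *\<^sub>v unit_vec d b) = M $$ (a,b)"
proof -
  have "(M *\<^sub>v unit_vec d b) $ a = M $$ (a,b)" using M a b by simp
  moreover have "ip (unit_vec d a) (M *\<^sub>v unit_vec d b) = (M *\<^sub>v unit_vec d b) $ a"
  proof -
    have "ip (unit_vec d a) (M *\<^sub>v unit_vec d b) = (\<Sum>i<d. if i = a then (M *\<^sub>v unit_vec d b) $ a else 0)"
      unfolding ip_def by (intro sum.cong) (auto simp: unit_vec_def)
    also have "\<dots> = (M *\<^sub>v unit_vec d b) $ a" using a by (simp add: sum.delta)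
    finally show ?thesis .
  qed
  ultimately show ?thesis by simp
qed

lemma mat_eq_ip:
  assumes M: "M \<in> carrier_mat d d" and M': "M' \<in> carrier_mat d d"
    and e: "\<And>x y. x \<in> carrier_vec d \<Longrightarrow> y \<in> carrier_vec d \<Longrightarrow> ip x (M *\<^sub>v y) = ip x (M' *\<^sub>v y)"
  shows "M = M'"
proof (rule eq_matI)
  fix a b assume "a < dim_row M'" "b < dim_col M'"
  then have a: "a < d" and b: "b < d" using M' by auto
  show "M $$ (a,b) = M' $$ (a,b)"
    using ip_unit[OF M a b] ip_unit[OF M' a b] e[of "unit_vec d a" "unit_vec d b"] by simp
qed (use M M' in auto)


definition XX :: "nat \<Rightarrow> nat \<Rightarrow> (nat \<Rightarrow> complex vec) \<Rightarrow> (nat \<Rightarrow> complex vec) \<Rightarrow> nat \<Rightarrow> complex vec" where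
  "XX m n u v b = tens m n (u (b div n)) (v (b mod n))"

lemma XX_index: "j < n \<Longrightarrow> XX m n u v (i*n+j) = tens m n (u i) (v j)"
  by (simp add: XX_def)

lemma XX_onb:
  assumes u: "onb m u" and v: "onb n v"
  shows "onb (m*n) (XX m n u v)"
  unfolding onb_def
proof (intro conjI allI impI)
  fix k assume "k < m*n" then show "XX m n u v k \<in> carrier_vec (m*n)" by (simp add: XX_def)
next
  fix k l assume k: "k < m*n" and l: "l < m*n"
  have "(\<Sum>i<m*n. cnj (XX m n u v k $ i) * XX m n u v l $ i) = ip (XX m n u v k) (XX m n u v l)"
    by (simp add: ip_def XX_def)
  also have "\<dots> = ip (u (k div n)) (u (l div n)) * ip (v (k mod n)) (v (l mod n))"
    unfolding XX_def using onb_carrier[OF u] onb_carrier[OF v] div_less_m[OF k] div_less_m[OF l]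
      mod_less_n[OF k] mod_less_n[OF l] by (intro ip_tens) auto
  also have "\<dots> = (if k = l then 1 else 0)"
    using onb_ip[OF u div_less_m[OF k] div_less_m[OF l]] onb_ip[OF v mod_less_n[OF k] mod_less_n[OF l]]
    by (auto simp: div_mod_decomp[symmetric]) (metis div_mult_mod_eq)
  finally show "(\<Sum>i<m*n. cnj (XX m n u v k $ i) * XX m n u v l $ i) = (if k = l then 1 else 0)" .
qed

lemma dephase_entry:
  assumes u: "onb m u" and v: "onb n v" and R: "R \<in> carrier_mat (m*n) (m*n)"
    and r: "r < m*n" and c: "c < m*n"
  shows "dephase m n u v R $$ (r,c) = (\<Sum>b<m*n. qform R (XX m n u v b) * XX m n u v b $ r * cnj (XX m n u v b $ c))"
proof -
  have "dephase m n u v R $$ (r,c) = (\<Sum>i<m. \<Sum>j<n. (kron m n (proj (u i)) (proj (v j)) * R * kron m n (proj (u i)) (proj (v j))) $$ (r, c))"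
    using r c by (simp add: dephase_def)
  also have "\<dots> = (\<Sum>i<m. \<Sum>j<n. qform R (tens m n (u i) (v j)) * tens m n (u i) (v j) $ r * cnj (tens m n (u i) (v j) $ c))"
  proof (intro sum.cong refl)
    fix i j assume i: "i \<in> {..<m}" and j: "j \<in> {..<n}"
    have ui: "u i \<in> carrier_vec m" and vj: "v j \<in> carrier_vec n" using onb_carrier u v i j by auto
    show "(kron m n (proj (u i)) (proj (v j)) * R * kron m n (proj (u i)) (proj (v j))) $$ (r, c) =
       qform R (tens m n (u i) (v j)) * tens m n (u i) (v j) $ r * cnj (tens m n (u i) (v j) $ c)"
      unfolding kron_proj[OF ui vj] proj_sandwich[OF R tens_carrier] using r c by (simp add: proj_def)
  qed
  also have "\<dots> = (\<Sum>b<m*n. qform R (XX m n u v b) * XX m n u v b $ r * cnj (XX m n u v b $ c))"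
    unfolding sum_mn by (intro sum.cong refl) (simp add: XX_index)
  finally show ?thesis .
qed

lemma dephase_carrier[simp]: "dephase m n u v R \<in> carrier_mat (m*n) (m*n)"
  by (simp add: dephase_def)

lemma dephase_eig:
  assumes u: "onb m u" and v: "onb n v" and R: "R \<in> carrier_mat (m*n) (m*n)" and b: "b < m*n"
  shows "dephase m n u v R *\<^sub>v XX m n u v b = qform R (XX m n u v b) \<cdot>\<^sub>v XX m n u v b"
  by (rule spec_eig[OF XX_onb[OF u v] dephase_carrier _ b]) (rule dephase_entry[OF u v R])

lemma dephase_entropy:
  assumes u: "onb m u" and v: "onb n v" and R: "R \<in> carrier_mat (m*n) (m*n)"
  shows "vN_entropy (dephase m n u v R) =
    - (\<Sum>i<m. \<Sum>j<n. Re (qform R (tens m n (u i) (v j))) * ln (Re (qform R (tens m n (u i) (v j)))))"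
proof -
  have "vN_entropy (dephase m n u v R) = - (\<Sum>b<m*n. Re (qform R (XX m n u v b)) * ln (Re (qform R (XX m n u v b))))"
    by (rule eig_entropy[OF dephase_carrier XX_onb[OF u v]]) (rule dephase_eig[OF u v R])
  also have "\<dots> = - (\<Sum>i<m. \<Sum>j<n. Re (qform R (tens m n (u i) (v j))) * ln (Re (qform R (tens m n (u i) (v j)))))"
    unfolding sum_mn by (simp add: XX_index)
  finally show ?thesis .
qed


lemma eigenbasis_gamma:
  assumes e: "eigenbasis d M u" and M: "M \<in> carrier_mat d d" and k: "k < d"
  shows "M *\<^sub>v u k = ip (u k) (M *\<^sub>v u k) \<cdot>\<^sub>v u k"
proof -
  have u: "onb d u" using e unfolding eigenbasis_def by auto
  obtain c where c: "M *\<^sub>v u k = c \<cdot>\<^sub>v u k" using e k unfolding eigenbasis_def by auto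
  have uk: "u k \<in> carrier_vec d" using onb_carrier[OF u k] .
  have "ip (u k) (M *\<^sub>v u k) = c" using c ip_smult_right[of "u k" "u k" c] onb_ip[OF u k k] uk by simp
  then show ?thesis using c by simp
qed

lemma ip_dephase:
  assumes u: "onb m u" and v: "onb n v" and R: "R \<in> carrier_mat (m*n) (m*n)"
    and y: "y \<in> carrier_vec (m*n)" and y': "y' \<in> carrier_vec (m*n)"
  shows "ip y (dephase m n u v R *\<^sub>v y') = (\<Sum>i<m. \<Sum>j<n. qform R (tens m n (u i) (v j)) *
     (cnj (ip (tens m n (u i) (v j)) y) * ip (tens m n (u i) (v j)) y'))"
proof -
  have "ip y (dephase m n u v R *\<^sub>v y') = (\<Sum>b<m*n. qform R (XX m n u v b) * (cnj (ip (XX m n u v b) y) * ip (XX m n u v b) y'))"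
    by (rule ip_spec[OF XX_onb[OF u v] dephase_carrier dephase_entry[OF u v R] y y'])
  also have "\<dots> = (\<Sum>i<m. \<Sum>j<n. qform R (tens m n (u i) (v j)) *
     (cnj (ip (tens m n (u i) (v j)) y) * ip (tens m n (u i) (v j)) y'))"
    unfolding sum_mn by (simp add: XX_index)
  finally show ?thesis .
qed

lemma red_C_dephase:
  assumes u: "eigenbasis m (red_C m n R) u" and v: "onb n v" and R: "R \<in> carrier_mat (m*n) (m*n)"
  shows "red_C m n (dephase m n u v R) = red_C m n R"
proof -
  have uo: "onb m u" using u unfolding eigenbasis_def by auto
  have M: "red_C m n R \<in> carrier_mat m m" by (simp add: red_C_def ptrace_P_def)
  have M': "red_C m n (dephase m n u v R) \<in> carrier_mat m m" by (simp add: red_C_def ptrace_P_def)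
  define P where "P i j = qform R (tens m n (u i) (v j))" for i j
  define \<gamma> where "\<gamma> i = ip (u i) (red_C m n R *\<^sub>v u i)" for i
  have eig: "\<And>k. k < m \<Longrightarrow> red_C m n R *\<^sub>v u k = \<gamma> k \<cdot>\<^sub>v u k"
    using eigenbasis_gamma[OF u M] unfolding \<gamma>_def by blast
  have gam: "\<gamma> i = (\<Sum>j<n. P i j)" if i: "i < m" for i
    unfolding \<gamma>_def red_C_def P_def
    using pt_P[OF R v onb_carrier[OF uo i] onb_carrier[OF uo i]] qform_ip[OF R tens_carrier] by simp
  show ?thesis
  proof (rule mat_eq_ip[OF M' M])
    fix x x' :: "complex vec" assume x: "x \<in> carrier_vec m" and x': "x' \<in> carrier_vec m"
    have ipt: "ip (tens m n (u i) (v j)) (tens m n y (v l)) = ip (u i) y * (if j = l then 1 else 0)"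
      if "i < m" "j < n" "l < n" "y \<in> carrier_vec m" for i j l and y :: "complex vec"
      using ip_tens[OF onb_carrier[OF uo] _ onb_carrier[OF v] onb_carrier[OF v]] onb_ip[OF v] that by simp
    have "ip x (red_C m n (dephase m n u v R) *\<^sub>v x') =
      (\<Sum>l<n. ip (tens m n x (v l)) (dephase m n u v R *\<^sub>v tens m n x' (v l)))"
      unfolding red_C_def by (rule pt_P[OF dephase_carrier v x x'])
    also have "\<dots> = (\<Sum>l<n. \<Sum>i<m. \<Sum>j<n. P i j * (cnj (ip (u i) x * (if j = l then 1 else 0)) * (ip (u i) x' * (if j = l then 1 else 0))))"
      unfolding ip_dephase[OF uo v R tens_carrier tens_carrier] P_def
      using ipt x x' by (intro sum.cong refl) auto
    also have "\<dots> = (\<Sum>l<n. \<Sum>i<m. P i l * (cnj (ip (u i) x) * ip (u i) x'))"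
    proof (intro sum.cong refl)
      fix l i assume l: "l \<in> {..<n}"
      have "(\<Sum>j<n. P i j * (cnj (ip (u i) x * (if j = l then 1 else 0)) * (ip (u i) x' * (if j = l then 1 else 0)))) =
        (\<Sum>j<n. if j = l then P i j * (cnj (ip (u i) x) * ip (u i) x') else 0)"
        by (intro sum.cong refl) auto
      also have "\<dots> = P i l * (cnj (ip (u i) x) * ip (u i) x')" using l by (simp add: sum.delta)
      finally show "(\<Sum>j<n. P i j * (cnj (ip (u i) x * (if j = l then 1 else 0)) * (ip (u i) x' * (if j = l then 1 else 0)))) =
        P i l * (cnj (ip (u i) x) * ip (u i) x')" .
    qed
    also have "\<dots> = (\<Sum>i<m. \<Sum>l<n. P i l * (cnj (ip (u i) x) * ip (u i) x'))" by (rule sum.swap)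
    also have "\<dots> = (\<Sum>i<m. \<gamma> i * (cnj (ip (u i) x) * ip (u i) x'))"
      using gam by (intro sum.cong refl) (simp add: sum_distrib_right)
    also have "\<dots> = ip x (red_C m n R *\<^sub>v x')"
      by (rule ip_spec[OF uo M _ x x', symmetric]) (rule spec_sum[OF uo M eig])
    finally show "ip x (red_C m n (dephase m n u v R) *\<^sub>v x') = ip x (red_C m n R *\<^sub>v x')" .
  qed
qed

lemma red_P_dephase:
  assumes u: "onb m u" and v: "eigenbasis n (red_P m n R) v" and R: "R \<in> carrier_mat (m*n) (m*n)"
  shows "red_P m n (dephase m n u v R) = red_P m n R"
proof -
  have vo: "onb n v" using v unfolding eigenbasis_def by auto
  have M: "red_P m n R \<in> carrier_mat n n" by (simp add: red_P_def ptrace_C_def)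
  have M': "red_P m n (dephase m n u v R) \<in> carrier_mat n n" by (simp add: red_P_def ptrace_C_def)
  define P where "P i j = qform R (tens m n (u i) (v j))" for i j
  define \<gamma> where "\<gamma> j = ip (v j) (red_P m n R *\<^sub>v v j)" for j
  have eig: "\<And>k. k < n \<Longrightarrow> red_P m n R *\<^sub>v v k = \<gamma> k \<cdot>\<^sub>v v k"
    using eigenbasis_gamma[OF v M] unfolding \<gamma>_def by blast
  have gam: "\<gamma> j = (\<Sum>i<m. P i j)" if j: "j < n" for j
    unfolding \<gamma>_def red_P_def P_def
    using pt_C[OF R u onb_carrier[OF vo j] onb_carrier[OF vo j]] qform_ip[OF R tens_carrier] by simp
  show ?thesis
  proof (rule mat_eq_ip[OF M' M])
    fix y y' :: "complex vec" assume y: "y \<in> carrier_vec n" and y': "y' \<in> carrier_vec n"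
    have ipt: "ip (tens m n (u i) (v j)) (tens m n (u l) z) = (if i = l then 1 else 0) * ip (v j) z"
      if "i < m" "j < n" "l < m" "z \<in> carrier_vec n" for i j l and z :: "complex vec"
      using ip_tens[OF onb_carrier[OF u] onb_carrier[OF u] onb_carrier[OF vo]] onb_ip[OF u] that by simp
    have "ip y (red_P m n (dephase m n u v R) *\<^sub>v y') =
      (\<Sum>l<m. ip (tens m n (u l) y) (dephase m n u v R *\<^sub>v tens m n (u l) y'))"
      unfolding red_P_def by (rule pt_C[OF dephase_carrier u y y'])
    also have "\<dots> = (\<Sum>l<m. \<Sum>i<m. \<Sum>j<n. P i j * (cnj ((if i = l then 1 else 0) * ip (v j) y) * ((if i = l then 1 else 0) * ip (v j) y')))"
      unfolding ip_dephase[OF u vo R tens_carrier tens_carrier] P_def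
      using ipt y y' by (intro sum.cong refl) auto
    also have "\<dots> = (\<Sum>l<m. \<Sum>j<n. P l j * (cnj (ip (v j) y) * ip (v j) y'))"
    proof (rule sum.cong[OF refl])
      fix l assume l: "l \<in> {..<m}"
      have "(\<Sum>i<m. \<Sum>j<n. P i j * (cnj ((if i = l then 1 else 0) * ip (v j) y) * ((if i = l then 1 else 0) * ip (v j) y'))) =
        (\<Sum>i<m. if i = l then (\<Sum>j<n. P i j * (cnj (ip (v j) y) * ip (v j) y')) else 0)"
        by (intro sum.cong refl) auto
      also have "\<dots> = (\<Sum>j<n. P l j * (cnj (ip (v j) y) * ip (v j) y'))" using l by (simp add: sum.delta)
      finally show "(\<Sum>i<m. \<Sum>j<n. P i j * (cnj ((if i = l then 1 else 0) * ip (v j) y) * ((if i = l then 1 else 0) * ip (v j) y'))) =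
        (\<Sum>j<n. P l j * (cnj (ip (v j) y) * ip (v j) y'))" .
    qed
    also have "\<dots> = (\<Sum>j<n. \<Sum>l<m. P l j * (cnj (ip (v j) y) * ip (v j) y'))" by (rule sum.swap)
    also have "\<dots> = (\<Sum>j<n. \<gamma> j * (cnj (ip (v j) y) * ip (v j) y'))"
      using gam by (intro sum.cong refl) (simp add: sum_distrib_right)
    also have "\<dots> = ip y (red_P m n R *\<^sub>v y')"
      by (rule ip_spec[OF vo M _ y y', symmetric]) (rule spec_sum[OF vo M eig])
    finally show "ip y (red_P m n (dephase m n u v R) *\<^sub>v y') = ip y (red_P m n R *\<^sub>v y')" .
  qed
qed




lemma density_psd: "density d R \<Longrightarrow> psd d R"
  unfolding density_def psd_def by auto

lemma KR_carrier: "kron m n A B * R \<in> carrier_mat (m*n) (m*n)" if "R \<in> carrier_mat (m*n) (m*n)"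
proof -
  have "kron m n A B \<in> carrier_mat (m*n) (m*n)" by (simp add: kron_def)
  then show ?thesis using that by simp
qed

lemma meas_trace:
  assumes R: "R \<in> carrier_mat (m*n) (m*n)" and v: "onb n v" and w: "w \<in> carrier_vec m"
  shows "mtrace (kron m n (proj w) (1\<^sub>m n) * R) = (\<Sum>l<n. qform R (tens m n w (v l)))"
proof -
  let ?K = "kron m n (proj w) (1\<^sub>m n)"
  let ?G = "ptrace_C m n (?K * R)"
  have G: "?G \<in> carrier_mat n n" by (simp add: ptrace_C_def)
  have "mtrace (?K * R) = mtrace ?G" by (rule mtrace_ptrace_C[symmetric]) (rule KR_carrier[OF R])
  also have "\<dots> = (\<Sum>l<n. ip (v l) (?G *\<^sub>v v l))" by (rule onb_trace[OF v G])
  also have "\<dots> = (\<Sum>l<n. qform R (tens m n w (v l)))"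
    using pt_meas[OF R w onb_carrier[OF v] onb_carrier[OF v]] qform_ip[OF R tens_carrier]
    by (intro sum.cong refl) auto
  finally show ?thesis .
qed

lemma meas_prob_real:
  assumes p: "psd (m*n) R" and v: "onb n v" and w: "w \<in> carrier_vec m"
  shows "mtrace (kron m n (proj w) (1\<^sub>m n) * R) = complex_of_real (Re (mtrace (kron m n (proj w) (1\<^sub>m n) * R)))"
    and "Re (mtrace (kron m n (proj w) (1\<^sub>m n) * R)) \<ge> 0"
proof -
  have R: "R \<in> carrier_mat (m*n) (m*n)" using p unfolding psd_def by auto
  have q: "Im (qform R x) = 0 \<and> Re (qform R x) \<ge> 0" if "x \<in> carrier_vec (m*n)" for x
    using p that unfolding psd_def by auto
  have "Im (mtrace (kron m n (proj w) (1\<^sub>m n) * R)) = 0"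
    unfolding meas_trace[OF R v w] Im_sum using q by (intro sum.neutral) auto
  then show "mtrace (kron m n (proj w) (1\<^sub>m n) * R) = complex_of_real (Re (mtrace (kron m n (proj w) (1\<^sub>m n) * R)))"
    by (simp add: complex_eq_iff)
  show "Re (mtrace (kron m n (proj w) (1\<^sub>m n) * R)) \<ge> 0"
    unfolding meas_trace[OF R v w] Re_sum using q by (intro sum_nonneg) auto
qed

lemma G_herm:
  assumes p: "psd (m*n) R" and w: "w \<in> carrier_vec m" and l: "l < n" and l': "l' < n"
  shows "ptrace_C m n (kron m n (proj w) (1\<^sub>m n) * R) $$ (l,l') = cnj (ptrace_C m n (kron m n (proj w) (1\<^sub>m n) * R) $$ (l',l))"
proof -
  have R: "R \<in> carrier_mat (m*n) (m*n)" and h: "adj R = R" using p unfolding psd_def by auto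
  let ?G = "ptrace_C m n (kron m n (proj w) (1\<^sub>m n) * R)"
  have G: "?G \<in> carrier_mat n n" by (simp add: ptrace_C_def)
  let ?e = "\<lambda>l. tens m n w (unit_vec n l)"
  have "?G $$ (l,l') = ip (?e l) (R *\<^sub>v ?e l')"
    using ip_unit[OF G l l'] pt_meas[OF R w, of "unit_vec n l" "unit_vec n l'"] by simp
  also have "\<dots> = ip (R *\<^sub>v ?e l) (?e l')" by (rule ip_herm[OF R h tens_carrier tens_carrier])
  also have "\<dots> = cnj (ip (?e l') (R *\<^sub>v ?e l))" by (rule ip_cnj[of _ "m*n"]) (use R in auto)
  also have "ip (?e l') (R *\<^sub>v ?e l) = ?G $$ (l',l)"
    using ip_unit[OF G l' l] pt_meas[OF R w, of "unit_vec n l'" "unit_vec n l"] by simp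
  finally show ?thesis .
qed

lemma cond_state_psd:
  assumes p: "psd (m*n) R" and w: "w \<in> carrier_vec m" and c: "c \<ge> 0"
  shows "psd n (complex_of_real c \<cdot>\<^sub>m ptrace_C m n (kron m n (proj w) (1\<^sub>m n) * R))"
proof -
  have R: "R \<in> carrier_mat (m*n) (m*n)" using p unfolding psd_def by auto
  have q: "Im (qform R x) = 0 \<and> Re (qform R x) \<ge> 0" if "x \<in> carrier_vec (m*n)" for x
    using p that unfolding psd_def by auto
  let ?G = "ptrace_C m n (kron m n (proj w) (1\<^sub>m n) * R)"
  let ?S = "complex_of_real c \<cdot>\<^sub>m ?G"
  have G: "?G \<in> carrier_mat n n" by (simp add: ptrace_C_def)
  have S: "?S \<in> carrier_mat n n" using G by simp
  have adj: "adj ?S = ?S"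
  proof (rule eq_matI)
    fix l l' assume "l < dim_row ?S" "l' < dim_col ?S"
    then have l: "l < n" and l': "l' < n" using S by auto
    show "adj ?S $$ (l,l') = ?S $$ (l,l')"
      using G_herm[OF p w l' l] l l' G by (simp add: adj_def)
  qed (use G in \<open>auto simp: adj_def\<close>)
  have "Im (qform ?S y) = 0 \<and> Re (qform ?S y) \<ge> 0" if y: "y \<in> carrier_vec n" for y
  proof -
    have "qform ?S y = ip y (?S *\<^sub>v y)" by (rule qform_ip[OF S y])
    also have "\<dots> = complex_of_real c * ip y (?G *\<^sub>v y)"
      unfolding smult_mat_vec[OF G y] using G y by (simp add: ip_smult_right)
    also have "\<dots> = complex_of_real c * qform R (tens m n w y)"
      using pt_meas[OF R w y y] qform_ip[OF R tens_carrier] by simp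
    finally show ?thesis using q[OF tens_carrier] c by simp
  qed
  then show ?thesis unfolding psd_def using S adj by auto
qed


lemma cond_state_eq:
  "cond_state m n w R j = complex_of_real (1 / meas_prob m n w R j) \<cdot>\<^sub>m ptrace_C m n (kron m n (proj (w j)) (1\<^sub>m n) * R)"
  unfolding cond_state_def by (simp add: of_real_divide)

lemma cond_state_props:
  assumes p: "psd (m*n) R" and v: "onb n v" and w: "onb m w" and j: "j < m" and pos: "meas_prob m n w R j > 0"
  shows "psd n (cond_state m n w R j)" and "mtrace (cond_state m n w R j) = 1"
proof -
  have R: "R \<in> carrier_mat (m*n) (m*n)" using p unfolding psd_def by auto
  have wj: "w j \<in> carrier_vec m" using onb_carrier[OF w j] .
  let ?p = "meas_prob m n w R j"
  show "psd n (cond_state m n w R j)" unfolding cond_state_eq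
    by (rule cond_state_psd[OF p wj]) (use pos in simp)
  let ?G = "ptrace_C m n (kron m n (proj (w j)) (1\<^sub>m n) * R)"
  have G: "?G \<in> carrier_mat n n" by (simp add: ptrace_C_def)
  have "mtrace ?G = complex_of_real ?p"
    using mtrace_ptrace_C[OF KR_carrier[OF R]] meas_prob_real(1)[OF p v wj] unfolding meas_prob_def by simp
  then show "mtrace (cond_state m n w R j) = 1"
    unfolding cond_state_eq using mtrace_smult[OF G] pos by simp
qed

lemma MCE_nonneg:
  assumes p: "psd (m*n) R" and v: "onb n v" and w: "onb m w"
  shows "meas_cond_entropy m n w R \<ge> 0"
  unfolding meas_cond_entropy_def
proof (rule sum_nonneg)
  fix j assume "j \<in> {j. j < m \<and> meas_prob m n w R j > 0}"
  then have j: "j < m" and pos: "meas_prob m n w R j > 0" by auto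
  have "vN_entropy (cond_state m n w R j) \<ge> 0"
    by (rule entropy_nonneg[OF cond_state_props[OF p v w j pos]])
  then show "meas_prob m n w R j * vN_entropy (cond_state m n w R j) \<ge> 0" using pos by simp
qed

lemma alg_bound:
  fixes PR :: "nat \<Rightarrow> nat \<Rightarrow> real" and S c :: "nat \<Rightarrow> real"
  assumes PR0: "\<And>i l. PR i l \<ge> 0" and cdef: "\<And>i. c i = (\<Sum>l<n. PR i l)"
    and Sb: "\<And>i. i < m \<Longrightarrow> c i > 0 \<Longrightarrow> S i \<le> - (\<Sum>l<n. (PR i l / c i) * ln (PR i l / c i))"
  shows "(\<Sum>i\<in>{i. i < m \<and> c i > 0}. c i * S i) \<le> - (\<Sum>i<m. \<Sum>l<n. PR i l * ln (PR i l)) + (\<Sum>i<m. c i * ln (c i))"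
proof -
  define T where "T i = - (\<Sum>l<n. PR i l * ln (PR i l)) + c i * ln (c i)" for i
  have c0: "c i \<ge> 0" for i unfolding cdef using PR0 by (intro sum_nonneg) auto
  have le: "c i * S i \<le> T i" if i: "i < m" and cp: "c i > 0" for i
  proof -
    have "c i * S i \<le> c i * (- (\<Sum>l<n. (PR i l / c i) * ln (PR i l / c i)))"
      by (rule mult_left_mono[OF Sb[OF i cp]]) (use cp in simp)
    also have "\<dots> = - (\<Sum>l<n. PR i l * ln (PR i l / c i))"
      using cp by (simp add: sum_distrib_left)
    also have "\<dots> = - (\<Sum>l<n. PR i l * ln (PR i l) - PR i l * ln (c i))"
    proof -
      have "PR i l * ln (PR i l / c i) = PR i l * ln (PR i l) - PR i l * ln (c i)" for l
      proof (cases "PR i l = 0")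
        case False
        then have "PR i l > 0" using PR0[of i l] by simp
        then show ?thesis using cp by (simp add: ln_div right_diff_distrib)
      qed simp
      then show ?thesis by simp
    qed
    also have "\<dots> = T i" unfolding T_def cdef by (simp add: sum_subtractf sum_distrib_right)
    finally show ?thesis .
  qed
  have T0: "T i = 0" if "c i = 0" for i
  proof -
    have "PR i l = 0" if "l < n" for l
      using \<open>c i = 0\<close> sum_nonneg_eq_0_iff[of "{..<n}" "PR i"] PR0 that unfolding cdef by auto
    then show ?thesis unfolding T_def using \<open>c i = 0\<close> by simp
  qed
  have "(\<Sum>i\<in>{i. i < m \<and> c i > 0}. c i * S i) \<le> (\<Sum>i\<in>{i. i < m \<and> c i > 0}. T i)"
    by (rule sum_mono) (use le in auto)
  also have "\<dots> = (\<Sum>i<m. T i)"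
  proof (rule sum.mono_neutral_left)
    show "\<forall>i\<in>{..<m} - {i. i < m \<and> c i > 0}. T i = 0" using T0 c0 by (auto simp: le_less)
  qed auto
  also have "\<dots> = - (\<Sum>i<m. \<Sum>l<n. PR i l * ln (PR i l)) + (\<Sum>i<m. c i * ln (c i))"
    unfolding T_def by (simp add: sum.distrib sum_negf sum_subtractf)
  finally show ?thesis .
qed


lemma MCE_u:
  assumes p: "psd (m*n) R" and u: "onb m u" and v: "onb n v"
  shows "meas_cond_entropy m n u R \<le>
     - (\<Sum>i<m. \<Sum>l<n. Re (qform R (tens m n (u i) (v l))) * ln (Re (qform R (tens m n (u i) (v l)))))
     + (\<Sum>i<m. (\<Sum>l<n. Re (qform R (tens m n (u i) (v l)))) * ln (\<Sum>l<n. Re (qform R (tens m n (u i) (v l)))))"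
proof -
  have R: "R \<in> carrier_mat (m*n) (m*n)" using p unfolding psd_def by auto
  have q: "Im (qform R x) = 0 \<and> Re (qform R x) \<ge> 0" if "x \<in> carrier_vec (m*n)" for x
    using p that unfolding psd_def by auto
  define PR where "PR i l = Re (qform R (tens m n (u i) (v l)))" for i l
  define c where "c i = (\<Sum>l<n. PR i l)" for i
  define S where "S i = vN_entropy (cond_state m n u R i)" for i
  have mp: "meas_prob m n u R i = c i" if i: "i < m" for i
    unfolding meas_prob_def meas_trace[OF R v onb_carrier[OF u i]] c_def PR_def Re_sum ..
  have set_eq: "{j. j < m \<and> meas_prob m n u R j > 0} = {j. j < m \<and> c j > 0}" using mp by auto
  have "meas_cond_entropy m n u R = (\<Sum>i\<in>{i. i < m \<and> c i > 0}. c i * S i)"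
    unfolding meas_cond_entropy_def set_eq S_def using mp by (intro sum.cong refl) auto
  also have "\<dots> \<le> - (\<Sum>i<m. \<Sum>l<n. PR i l * ln (PR i l)) + (\<Sum>i<m. c i * ln (c i))"
  proof (rule alg_bound)
    show "PR i l \<ge> 0" for i l unfolding PR_def using q[OF tens_carrier] by auto
    show "c i = (\<Sum>l<n. PR i l)" for i by (simp add: c_def)
    fix i assume i: "i < m" and cp: "c i > 0"
    have pos: "meas_prob m n u R i > 0" using mp[OF i] cp by simp
    have ui: "u i \<in> carrier_vec m" using onb_carrier[OF u i] .
    let ?G = "ptrace_C m n (kron m n (proj (u i)) (1\<^sub>m n) * R)"
    have G: "?G \<in> carrier_mat n n" by (simp add: ptrace_C_def)
    have dq: "Re (ip (v l) (cond_state m n u R i *\<^sub>v v l)) = PR i l / c i" if l: "l < n" for l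
    proof -
      have vl: "v l \<in> carrier_vec n" using onb_carrier[OF v l] .
      have "ip (v l) (cond_state m n u R i *\<^sub>v v l) = complex_of_real (1 / c i) * ip (v l) (?G *\<^sub>v v l)"
        unfolding cond_state_eq mp[OF i] smult_mat_vec[OF G vl] using G vl by (simp add: ip_smult_right)
      also have "ip (v l) (?G *\<^sub>v v l) = qform R (tens m n (u i) (v l))"
        using pt_meas[OF R ui vl vl] qform_ip[OF R tens_carrier] by simp
      finally show ?thesis unfolding PR_def by simp
    qed
    have "S i \<le> - (\<Sum>l<n. Re (ip (v l) (cond_state m n u R i *\<^sub>v v l)) * ln (Re (ip (v l) (cond_state m n u R i *\<^sub>v v l))))"
      unfolding S_def by (rule entropy_le_diag[OF cond_state_props(1)[OF p v u i pos] v])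
    also have "\<dots> = - (\<Sum>l<n. (PR i l / c i) * ln (PR i l / c i))"
      using dq by simp
    finally show "S i \<le> - (\<Sum>l<n. (PR i l / c i) * ln (PR i l / c i))" .
  qed
  finally show ?thesis unfolding PR_def c_def .
qed


lemma entropy_red_C:
  assumes R: "R \<in> carrier_mat (m*n) (m*n)" and u: "eigenbasis m (red_C m n R) u" and v: "onb n v"
  shows "vN_entropy (red_C m n R) =
    - (\<Sum>i<m. (\<Sum>l<n. Re (qform R (tens m n (u i) (v l)))) * ln (\<Sum>l<n. Re (qform R (tens m n (u i) (v l)))))"
proof -
  have uo: "onb m u" using u unfolding eigenbasis_def by auto
  have M: "red_C m n R \<in> carrier_mat m m" by (simp add: red_C_def ptrace_P_def)
  define \<gamma> where "\<gamma> i = ip (u i) (red_C m n R *\<^sub>v u i)" for i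
  have eig: "\<And>k. k < m \<Longrightarrow> red_C m n R *\<^sub>v u k = \<gamma> k \<cdot>\<^sub>v u k"
    using eigenbasis_gamma[OF u M] unfolding \<gamma>_def by blast
  have gam: "Re (\<gamma> i) = (\<Sum>l<n. Re (qform R (tens m n (u i) (v l))))" if i: "i < m" for i
    unfolding \<gamma>_def red_C_def
    using pt_P[OF R v onb_carrier[OF uo i] onb_carrier[OF uo i]] qform_ip[OF R tens_carrier] by (simp add: Re_sum)
  have "vN_entropy (red_C m n R) = - (\<Sum>k<m. Re (\<gamma> k) * ln (Re (\<gamma> k)))"
    by (rule eig_entropy[OF M uo eig])
  also have "\<dots> = - (\<Sum>i<m. (\<Sum>l<n. Re (qform R (tens m n (u i) (v l)))) * ln (\<Sum>l<n. Re (qform R (tens m n (u i) (v l)))))"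
    using gam by simp
  finally show ?thesis .
qed

theorem theorem2:
  fixes m n :: nat and \<rho> :: "complex mat" and u v :: "nat \<Rightarrow> complex vec"
  assumes "density (m * n) \<rho>"
    and "eigenbasis m (red_C m n \<rho>) u"
    and "eigenbasis n (red_P m n \<rho>) v"
  shows "discord m n \<rho> \<le> MID m n u v \<rho>"
proof -
  have p: "psd (m*n) \<rho>" using density_psd[OF assms(1)] .
  have R: "\<rho> \<in> carrier_mat (m*n) (m*n)" using p unfolding psd_def by auto
  have uo: "onb m u" using assms(2) unfolding eigenbasis_def by auto
  have vo: "onb n v" using assms(3) unfolding eigenbasis_def by auto
  define H where "H = - (\<Sum>i<m. \<Sum>l<n. Re (qform \<rho> (tens m n (u i) (v l))) * ln (Re (qform \<rho> (tens m n (u i) (v l)))))"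
  define SC where "SC = - (\<Sum>i<m. (\<Sum>l<n. Re (qform \<rho> (tens m n (u i) (v l)))) * ln (\<Sum>l<n. Re (qform \<rho> (tens m n (u i) (v l)))))"
  have mce: "meas_cond_entropy m n u \<rho> \<le> H - SC"
    using MCE_u[OF p uo vo] unfolding H_def SC_def by simp
  have bdd: "bdd_below ((\<lambda>w. meas_cond_entropy m n w \<rho>) ` {w. onb m w})"
    by (rule bdd_belowI[of _ 0]) (use MCE_nonneg[OF p vo] in auto)
  have inf: "(INF w \<in> {w. onb m w}. meas_cond_entropy m n w \<rho>) \<le> meas_cond_entropy m n u \<rho>"
    by (rule cINF_lower[OF bdd]) (use uo in simp)
  have SD: "vN_entropy (dephase m n u v \<rho>) = H"
    unfolding H_def by (rule dephase_entropy[OF uo vo R])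
  have SCe: "vN_entropy (red_C m n \<rho>) = SC"
    unfolding SC_def by (rule entropy_red_C[OF R assms(2) vo])
  have mid: "MID m n u v \<rho> = vN_entropy (dephase m n u v \<rho>) - vN_entropy \<rho>"
    unfolding MID_def mutual_info_def red_C_dephase[OF assms(2) vo R] red_P_dephase[OF uo assms(3) R] by simp
  have "discord m n \<rho> = (INF w \<in> {w. onb m w}. meas_cond_entropy m n w \<rho>) - (vN_entropy \<rho> - SC)"
    unfolding discord_def cond_entropy_def SCe ..
  also have "\<dots> \<le> (H - SC) - (vN_entropy \<rho> - SC)" using inf mce by simp
  also have "\<dots> = MID m n u v \<rho>" using mid SD by simp
  finally show ?thesis .
qed


end
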